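(* Let $Z$ be a fat point scheme in $\mathbb{P}^1\times\mathbb{P}^1$ and set $c_{i,j}=\Delta H_Z(i,j)$. Then (i) for every $0\le j\le|\beta_Z|-1$, $\alpha^*_{j+1}=\sum_{h=0}^{|\alpha_Z|-1}c_{h,j}$, where $\alpha^*_{j+1}$ is the $(j+1)$-th entry of $\alpha_Z^*$ (taken to be $0$ if $\alpha_Z^*$ is shorter); (ii) for every $0\le i\le|\alpha_Z|-1$, $\beta^*_{i+1}=\sum_{h=0}^{|\beta_Z|-1}c_{i,h}$, where $\beta^*_{i+1}$ is the $(i+1)$-th entry of $\beta_Z^*$ (taken to be $0$ if $\beta_Z^*$ is shorter).
   Context: $\mathbf{k}$ algebraically closed, $R=\mathbf{k}[x_0,x_1,y_0,y_1]$ bigraded with $\deg x_i=(1,0)$, $\deg y_i=(0,1)$; a fat point scheme $Z$ has ideal $I_Z=\bigcap\wp_{P_i}^{m_i}$ and Hilbert function $H_Z(i,j)=\dim_{\mathbf{k}}(R/I_Z)_{(i,j)}$; $\Delta H_Z(i,j)=H_Z(i,j)-H_Z(i-1,j)-H_Z(i,j-1)+H_Z(i-1,j-1)$ with $H_Z=0$ outside $\mathbb{N}^2$. With $\pi_1(\mathrm{Supp}\,Z)=\{R_1,\dots,R_r\}$, $\pi_2(\mathrm{Supp}\,Z)=\{Q_1,\dots,Q_t\}$ and $m_{ij}$ the multiplicity of $R_i\times Q_j$ ($0$ if absent): $l_i=\max_j m_{ij}$, $a_{i,k}=\sum_j(m_{ij}-k)_+$ ($0\le k\le l_i-1$), $\alpha_Z$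 = all $a_{i,k}$ in non-increasing order; $l'_j=\max_i m_{ij}$, $b_{j,k}=\sum_i(m_{ij}-k)_+$ ($0\le k\le l'_j-1$), $\beta_Z$ = all $b_{j,k}$ in non-increasing order; $(n)_+=\max\{0,n\}$. The conjugate of a partition $\lambda$ is $\lambda^*$ with $\lambda^*_i=\#\{j:\lambda_j\ge i\}$, $i=1,\dots,\lambda_1$. *)

theory Defs
  imports "HOL-Library.Poly_Mapping" "HOL-Computational_Algebra.Polynomial"
begin

text \<open>The four variables of R = k[x0,x1,y0,y1]; deg x_i = (1,0), deg y_i = (0,1).\<close>
datatype var = X0 | X1 | Y0 | Y1

type_synonym 'k bipoly = "(var \<Rightarrow>\<^sub>0 nat) \<Rightarrow>\<^sub>0 'k"

definition pvar :: "var \<Rightarrow> 'k::comm_ring_1 bipoly" where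
  "pvar v = Poly_Mapping.single (Poly_Mapping.single v 1) 1"

definition pconst :: "'k::comm_ring_1 \<Rightarrow> 'k bipoly" where
  "pconst c = Poly_Mapping.single 0 c"

definition pscale :: "'k::comm_ring_1 \<Rightarrow> 'k bipoly \<Rightarrow> 'k bipoly" where
  "pscale c p = pconst c * p"

definition bihom :: "nat \<Rightarrow> nat \<Rightarrow> 'k::comm_ring_1 bipoly set" where
  "bihom i j = {p. \<forall>mon \<in> Poly_Mapping.keys p. Poly_Mapping.lookup mon X0 + Poly_Mapping.lookup mon X1 = i \<and> Poly_Mapping.lookup mon Y0 + Poly_Mapping.lookup mon Y1 = j}"

definition ideal_gen :: "'k::comm_ring_1 bipoly set \<Rightarrow> 'k bipoly set" where
  "ideal_gen S = {p. \<exists>F c. finite F \<and> F \<subseteq> S \<and> p = (\<Sum>f\<in>F. c f * f)}"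

definition ideal_pow :: "'k::comm_ring_1 bipoly set \<Rightarrow> nat \<Rightarrow> 'k bipoly set" where
  "ideal_pow I m = ideal_gen {prod_list xs | xs. length xs = m \<and> set xs \<subseteq> I}"

text \<open>Ideal of the point [a0:a1] x [b0:b1] of P^1 x P^1.\<close>
definition point_ideal :: "'k::comm_ring_1 \<times> 'k \<Rightarrow> 'k \<times> 'k \<Rightarrow> 'k bipoly set" where
  "point_ideal A B = ideal_gen
     {pconst (snd A) * pvar X0 - pconst (fst A) * pvar X1,
      pconst (snd B) * pvar Y0 - pconst (fst B) * pvar Y1}"

text \<open>Points of P^1: nonzero pairs; two pairs give distinct points iff not proportional.\<close>
definition proj_pt :: "'k::field \<times> 'k \<Rightarrow> bool" where
  "proj_pt A \<longleftrightarrow> A \<noteq> (0, 0)"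

definition proj_distinct :: "'k::field \<times> 'k \<Rightarrow> 'k \<times> 'k \<Rightarrow> bool" where
  "proj_distinct A B \<longleftrightarrow> fst A * snd B \<noteq> snd A * fst B"

text \<open>A fat point scheme Z is described by the distinct first projections R_0..R_(r-1),
  the distinct second projections Q_0..Q_(t-1) of its support, and the multiplicities
  m i j of R_i x Q_j (0 if the point is absent); every R_i and Q_j is hit by the support.\<close>
definition fat_point_data :: "nat \<Rightarrow> nat \<Rightarrow> (nat \<Rightarrow> 'k::field \<times> 'k) \<Rightarrow> (nat \<Rightarrow> 'k \<times> 'k)
    \<Rightarrow> (nat \<Rightarrow> nat \<Rightarrow> nat) \<Rightarrow> bool" where
  "fat_point_data r t R Q m \<longleftrightarrow>
     (\<forall>i<r. proj_pt (R i)) \<and> (\<forall>j<t. proj_pt (Q j)) \<and>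
     (\<forall>i<r. \<forall>i'<r. i \<noteq> i' \<longrightarrow> proj_distinct (R i) (R i')) \<and>
     (\<forall>j<t. \<forall>j'<t. j \<noteq> j' \<longrightarrow> proj_distinct (Q j) (Q j')) \<and>
     (\<forall>i<r. \<exists>j<t. m i j > 0) \<and> (\<forall>j<t. \<exists>i<r. m i j > 0)"

definition fat_ideal :: "nat \<Rightarrow> nat \<Rightarrow> (nat \<Rightarrow> 'k::field \<times> 'k) \<Rightarrow> (nat \<Rightarrow> 'k \<times> 'k)
    \<Rightarrow> (nat \<Rightarrow> nat \<Rightarrow> nat) \<Rightarrow> 'k bipoly set" where
  "fat_ideal r t R Q m =
     (\<Inter>(i, j) \<in> {(i, j). i < r \<and> j < t \<and> m i j > 0}. ideal_pow (point_ideal (R i) (Q j)) (m i j))"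

text \<open>Hilbert function H_Z(i,j) = dim_k (R/I_Z)_(i,j) = dim_k R_(i,j) - dim_k (I_Z)_(i,j),
  extended by 0 outside N^2.\<close>
definition hilb :: "nat \<Rightarrow> nat \<Rightarrow> (nat \<Rightarrow> 'k::field \<times> 'k) \<Rightarrow> (nat \<Rightarrow> 'k \<times> 'k)
    \<Rightarrow> (nat \<Rightarrow> nat \<Rightarrow> nat) \<Rightarrow> int \<Rightarrow> int \<Rightarrow> int" where
  "hilb r t R Q m i j =
     (if i < 0 \<or> j < 0 then 0
      else int (vector_space.dim pscale (bihom (nat i) (nat j) :: 'k bipoly set))
         - int (vector_space.dim pscale (fat_ideal r t R Q m \<inter> bihom (nat i) (nat j))))"

definition delta_hilb :: "nat \<Rightarrow> nat \<Rightarrow> (nat \<Rightarrow> 'k::field \<times> 'k) \<Rightarrow> (nat \<Rightarrow> 'k \<times> 'k)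
    \<Rightarrow> (nat \<Rightarrow> nat \<Rightarrow> nat) \<Rightarrow> int \<Rightarrow> int \<Rightarrow> int" where
  "delta_hilb r t R Q m i j =
     hilb r t R Q m i j - hilb r t R Q m (i - 1) j - hilb r t R Q m i (j - 1)
     + hilb r t R Q m (i - 1) (j - 1)"

definition row_l :: "nat \<Rightarrow> (nat \<Rightarrow> nat \<Rightarrow> nat) \<Rightarrow> nat \<Rightarrow> nat" where
  "row_l t m i = Max ({m i j | j. j < t} \<union> {0})"

definition col_l :: "nat \<Rightarrow> (nat \<Rightarrow> nat \<Rightarrow> nat) \<Rightarrow> nat \<Rightarrow> nat" where
  "col_l r m j = Max ({m i j | i. i < r} \<union> {0})"

definition alpha :: "nat \<Rightarrow> nat \<Rightarrow> (nat \<Rightarrow> nat \<Rightarrow> nat) \<Rightarrow> nat list" where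
  "alpha r t m = rev (sort [(\<Sum>j<t. m i j - k). i \<leftarrow> [0..<r], k \<leftarrow> [0..<row_l t m i]])"

definition beta :: "nat \<Rightarrow> nat \<Rightarrow> (nat \<Rightarrow> nat \<Rightarrow> nat) \<Rightarrow> nat list" where
  "beta r t m = rev (sort [(\<Sum>i<r. m i j - k). j \<leftarrow> [0..<t], k \<leftarrow> [0..<col_l r m j]])"

text \<open>Conjugate partition, as a function of the (1-based) index; 0 beyond its length.\<close>
definition conj_part :: "nat list \<Rightarrow> nat \<Rightarrow> nat" where
  "conj_part lam i = card {j. j < length lam \<and> lam ! j \<ge> i}"

end

theory Submission
  imports Defs
begin

instantiation var :: linorder
begin
fun var_idx :: "var \<Rightarrow> nat" where "var_idx X0 = 0" | "var_idx X1 = 1" | "var_idx Y0 = 2" | "var_idx Y1 = 3"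
definition "less_eq_var a b = (var_idx a \<le> var_idx b)"
definition "less_var a b = (var_idx a < var_idx b)"
instance proof
  fix x y z :: var
  show "x \<le> x" by (simp add: less_eq_var_def)
  show "(x < y) = (x \<le> y \<and> \<not> y \<le> x)" by (auto simp add: less_eq_var_def less_var_def)
  show "x \<le> y \<Longrightarrow> y \<le> z \<Longrightarrow> x \<le> z" by (auto simp add: less_eq_var_def)
  show "x \<le> y \<Longrightarrow> y \<le> x \<Longrightarrow> x = y" by (cases x; cases y; simp add: less_eq_var_def)
  show "x \<le> y \<or> y \<le> x" by (auto simp add: less_eq_var_def)
qed
end

type_synonym mon = "var \<Rightarrow>\<^sub>0 nat"

lemma pconst_mult: "pconst (a * b) = (pconst a * pconst b :: 'k::comm_ring_1 bipoly)"
  unfolding pconst_def by (simp add: mult_single)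
lemma pconst_add: "pconst (a + b) = (pconst a + pconst b :: 'k::comm_ring_1 bipoly)"
  unfolding pconst_def by (simp add: single_add)
lemma pconst_diff: "pconst (a - b) = (pconst a - pconst b :: 'k::comm_ring_1 bipoly)"
  unfolding pconst_def by (simp add: single_diff)
lemma pconst_uminus: "pconst (- b) = (- pconst b :: 'k::comm_ring_1 bipoly)"
  unfolding pconst_def by (simp add: single_uminus)
lemma pconst_1[simp]: "pconst 1 = (1 :: 'k::comm_ring_1 bipoly)"
  unfolding pconst_def by simp
lemma pconst_0[simp]: "pconst 0 = (0 :: 'k::comm_ring_1 bipoly)"
  unfolding pconst_def by simp
lemma pconst_eq_0_iff[simp]: "pconst c = (0 :: 'k::comm_ring_1 bipoly) \<longleftrightarrow> c = 0"
  unfolding pconst_def by (metis single_zero inj_single injD lookup_single_eq lookup_zero)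
lemma pconst_power: "pconst (a ^ n) = (pconst a ^ n :: 'k::comm_ring_1 bipoly)"
  by (induct n) (simp_all add: pconst_mult)

interpretation vs: vector_space "pscale :: 'k::field \<Rightarrow> 'k bipoly \<Rightarrow> 'k bipoly"
  by unfold_locales (simp_all add: pscale_def pconst_add pconst_mult algebra_simps)

lemma pscale_eq: "pscale c p = pconst c * p" by (simp add: pscale_def)

lemma test_idom: "(a::'k::field bipoly) * b = 0 \<Longrightarrow> a = 0 \<or> b = 0" by simp

abbreviation lk :: "('a \<Rightarrow>\<^sub>0 'b::zero) \<Rightarrow> 'a \<Rightarrow> 'b" where "lk \<equiv> Poly_Mapping.lookup"
abbreviation ks :: "('a \<Rightarrow>\<^sub>0 'b::zero) \<Rightarrow> 'a set" where "ks \<equiv> Poly_Mapping.keys"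
abbreviation sg :: "'a \<Rightarrow> 'b \<Rightarrow> ('a \<Rightarrow>\<^sub>0 'b::zero)" where "sg \<equiv> Poly_Mapping.single"

definition bdx :: "mon \<Rightarrow> nat" where "bdx m = lk m X0 + lk m X1"
definition bdy :: "mon \<Rightarrow> nat" where "bdy m = lk m Y0 + lk m Y1"

lemma bihom_iff: "p \<in> bihom i j \<longleftrightarrow> (\<forall>m\<in>ks p. bdx m = i \<and> bdy m = j)"
  by (simp add: bihom_def bdx_def bdy_def)

lemma bihom_0[simp]: "0 \<in> bihom i j" by (simp add: bihom_iff)

lemma bihom_add: "p \<in> bihom i j \<Longrightarrow> q \<in> bihom i j \<Longrightarrow> p + q \<in> bihom i j"
  using keys_add[of p q] unfolding bihom_iff by blast

lemma keys_uminus': "ks (- (p::'a \<Rightarrow>\<^sub>0 'b::ab_group_add)) = ks p"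
  by (auto simp: in_keys_iff)

lemma bihom_uminus: "p \<in> bihom i j \<Longrightarrow> - (p::'k::comm_ring_1 bipoly) \<in> bihom i j"
  unfolding bihom_iff by (simp add: keys_uminus')

lemma bihom_diff: "p \<in> bihom i j \<Longrightarrow> q \<in> bihom i j \<Longrightarrow> (p::'k::comm_ring_1 bipoly) - q \<in> bihom i j"
  using bihom_add[of p i j "-q"] bihom_uminus[of q] by simp

lemma bihom_mult: "p \<in> bihom i j \<Longrightarrow> q \<in> bihom i' j' \<Longrightarrow> (p::'k::comm_ring_1 bipoly) * q \<in> bihom (i + i') (j + j')"
proof -
  assume p: "p \<in> bihom i j" and q: "q \<in> bihom i' j'"
  show ?thesis unfolding bihom_iff
  proof
    fix m assume "m \<in> ks (p * q)"
    then obtain a b where "a \<in> ks p" "b \<in> ks q" "m = a + b" using keys_mult[of p q] by blast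
    then show "bdx m = i + i' \<and> bdy m = j + j'" using p q unfolding bihom_iff bdx_def bdy_def
      by (auto simp: lookup_add)
  qed
qed

lemma bihom_sum: "(\<And>x. x \<in> S \<Longrightarrow> f x \<in> bihom i j) \<Longrightarrow> sum f S \<in> bihom i j"
  by (induct S rule: infinite_finite_induct) (auto intro: bihom_add)

lemma keys_pconst: "ks (pconst c) \<subseteq> {0}" by (simp add: pconst_def)

lemma bihom_pconst[simp]: "pconst c \<in> bihom 0 0"
  using keys_pconst[of c] unfolding bihom_iff bdx_def bdy_def by auto

lemma bihom_1[simp]: "(1::'k::comm_ring_1 bipoly) \<in> bihom 0 0"
  using bihom_pconst[of "1::'k"] by simp

lemma bihom_cmult: "p \<in> bihom i j \<Longrightarrow> pconst c * (p::'k::comm_ring_1 bipoly) \<in> bihom i j"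
  using bihom_mult[OF bihom_pconst, of p i j c] by simp

lemma bihom_power: "p \<in> bihom i j \<Longrightarrow> (p::'k::comm_ring_1 bipoly) ^ n \<in> bihom (n * i) (n * j)"
  by (induct n) (auto dest: bihom_mult)

lemma bihom_prod: "(\<And>x. x \<in> S \<Longrightarrow> f x \<in> bihom (di x) (dj x)) \<Longrightarrow>
   (\<Prod>x\<in>S. f x :: 'k::comm_ring_1 bipoly) \<in> bihom (\<Sum>x\<in>S. di x) (\<Sum>x\<in>S. dj x)"
  by (induct S rule: infinite_finite_induct) (auto dest: bihom_mult)

lemma lookup_pvar: "lk (pvar v) m = (if m = sg v 1 then 1 else 0)"
  by (simp add: pvar_def lookup_single when_def eq_commute)

lemma keys_pvar: "ks (pvar v :: 'k::comm_ring_1 bipoly) = {sg v 1}"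
  by (simp add: pvar_def)

lemma pvar_bihom:
  "pvar X0 \<in> bihom 1 0" "pvar X1 \<in> bihom 1 0" "pvar Y0 \<in> bihom 0 1" "pvar Y1 \<in> bihom 0 1"
  by (simp_all add: bihom_iff keys_pvar bdx_def bdy_def lookup_single)

lemma vs_subspace_bihom: "vs.subspace (bihom i j :: 'k::field bipoly set)"
  unfolding vs.subspace_def by (auto simp: pscale_eq intro: bihom_add bihom_cmult)

lemma pvar_power: "(pvar v :: 'k::comm_ring_1 bipoly) ^ n = sg (sg v n) 1"
proof (induct n)
  case 0 then show ?case by simp
next
  case (Suc n)
  have "sg v 1 + sg v n = sg v (Suc n)" by (simp add: single_add[symmetric])
  then show ?case using Suc by (simp add: pvar_def mult_single)
qed

lemma single_mult_1: "sg a (1::'k::comm_ring_1) * sg b 1 = sg (a + b) 1"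
  by (simp add: mult_single)

lemma single_eq_pconst: "sg m c = pconst c * (sg m 1 :: 'k::comm_ring_1 bipoly)"
  by (simp add: pconst_def mult_single)

lemma poly_expand: "p = (\<Sum>m\<in>ks p. sg m (lk p m))"
  by (rule poly_mapping_eqI) (simp add: lookup_sum lookup_single when_def in_keys_iff)

lemma poly_expand': "(p::'k::comm_ring_1 bipoly) = (\<Sum>m\<in>ks p. pconst (lk p m) * sg m 1)"
  by (subst poly_expand) (simp add: single_eq_pconst[symmetric])

definition mev :: "(var \<Rightarrow> 'k::comm_ring_1 bipoly) \<Rightarrow> mon \<Rightarrow> 'k bipoly" where
  "mev \<sigma> m = \<sigma> X0 ^ lk m X0 * \<sigma> X1 ^ lk m X1 * \<sigma> Y0 ^ lk m Y0 * \<sigma> Y1 ^ lk m Y1"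

definition subst :: "(var \<Rightarrow> 'k::comm_ring_1 bipoly) \<Rightarrow> 'k bipoly \<Rightarrow> 'k bipoly" where
  "subst \<sigma> p = (\<Sum>m\<in>ks p. pconst (lk p m) * mev \<sigma> m)"

lemma mev_add: "mev \<sigma> (a + b) = mev \<sigma> a * mev \<sigma> b"
  by (simp add: mev_def lookup_add power_add algebra_simps)

lemma mev_0[simp]: "mev \<sigma> 0 = 1" by (simp add: mev_def)

lemma subst_superset: "finite K \<Longrightarrow> ks p \<subseteq> K \<Longrightarrow> subst \<sigma> p = (\<Sum>m\<in>K. pconst (lk p m) * mev \<sigma> m)"
  unfolding subst_def by (rule sum.mono_neutral_left) (auto simp: in_keys_iff)

lemma subst_add: "subst \<sigma> (p + q) = subst \<sigma> p + subst \<sigma> q"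
proof -
  let ?K = "ks p \<union> ks q"
  have "subst \<sigma> (p + q) = (\<Sum>m\<in>?K. pconst (lk (p + q) m) * mev \<sigma> m)"
    using keys_add[of p q] by (intro subst_superset) auto
  also have "\<dots> = (\<Sum>m\<in>?K. pconst (lk p m) * mev \<sigma> m) + (\<Sum>m\<in>?K. pconst (lk q m) * mev \<sigma> m)"
    by (simp add: lookup_add pconst_add algebra_simps sum.distrib)
  also have "\<dots> = subst \<sigma> p + subst \<sigma> q"
    using subst_superset[of ?K p \<sigma>] subst_superset[of ?K q \<sigma>] by simp
  finally show ?thesis .
qed

lemma subst_0[simp]: "subst \<sigma> 0 = 0" by (simp add: subst_def)

lemma subst_uminus: "subst \<sigma> (- p) = - subst \<sigma> p"
  using subst_add[of \<sigma> p "-p"] by (intro minus_unique[symmetric]) simp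

lemma subst_diff: "subst \<sigma> (p - q) = subst \<sigma> p - subst \<sigma> q"
  using subst_add[of \<sigma> p "-q"] by (simp add: subst_uminus)

lemma subst_sum: "subst \<sigma> (sum f S) = (\<Sum>x\<in>S. subst \<sigma> (f x))"
  by (induct S rule: infinite_finite_induct) (auto simp: subst_add)

lemma subst_single: "subst \<sigma> (sg m c) = pconst c * mev \<sigma> m"
  by (simp add: subst_def)

lemma subst_mult: "subst \<sigma> (p * q) = subst \<sigma> p * subst \<sigma> q"
proof -
  have "p * q = (\<Sum>a\<in>ks p. \<Sum>b\<in>ks q. sg a (lk p a) * sg b (lk q b))"
    by (subst poly_expand[of p], subst poly_expand[of q]) (simp add: sum_product)
  then have "subst \<sigma> (p * q) = (\<Sum>a\<in>ks p. \<Sum>b\<in>ks q. subst \<sigma> (sg a (lk p a)) * subst \<sigma> (sg b (lk q b)))"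
    by (simp add: subst_sum mult_single subst_single mev_add pconst_mult algebra_simps)
  also have "\<dots> = subst \<sigma> p * subst \<sigma> q"
    by (subst (3) poly_expand[of p], subst (3) poly_expand[of q]) (simp add: sum_product subst_sum)
  finally show ?thesis .
qed

lemma subst_pconst[simp]: "subst \<sigma> (pconst c) = pconst c"
  by (simp add: pconst_def subst_single)

lemma subst_1[simp]: "subst \<sigma> 1 = 1"
  using subst_pconst[of \<sigma> 1] by simp

lemma subst_pvar[simp]: "subst \<sigma> (pvar v) = \<sigma> v"
  by (cases v) (simp_all add: pvar_def subst_single mev_def lookup_single)

lemma subst_power: "subst \<sigma> (p ^ n) = subst \<sigma> p ^ n"
  by (induct n) (simp_all add: subst_mult)

lemma subst_prod: "subst \<sigma> (prod f S) = (\<Prod>x\<in>S. subst \<sigma> (f x))"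
  by (induct S rule: infinite_finite_induct) (auto simp: subst_mult)

lemma dvd_diff_mult: "(d::'a::comm_ring_1) dvd a - a' \<Longrightarrow> d dvd b - b' \<Longrightarrow> d dvd a * b - a' * b'"
proof -
  assume "d dvd a - a'" "d dvd b - b'"
  then have "d dvd a * (b - b') + (a - a') * b'" by simp
  then show ?thesis by (simp add: algebra_simps)
qed

lemma dvd_diff_power: "(d::'a::comm_ring_1) dvd a - a' \<Longrightarrow> d dvd a ^ n - a' ^ n"
  by (induct n) (simp_all add: dvd_diff_mult)

lemma mev_pvar: "mev pvar m = (sg m 1 :: 'k::comm_ring_1 bipoly)"
proof -
  have "m = sg X0 (lk m X0) + sg X1 (lk m X1) + sg Y0 (lk m Y0) + sg Y1 (lk m Y1)"
    by (rule poly_mapping_eqI, rename_tac v, case_tac v) (simp_all add: lookup_add lookup_single)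
  then have "sg m (1::'k) = sg (sg X0 (lk m X0) + sg X1 (lk m X1) + sg Y0 (lk m Y0) + sg Y1 (lk m Y1)) 1"
    by simp
  also have "\<dots> = mev pvar m"
    by (simp add: mev_def pvar_power single_mult_1)
  finally show ?thesis by simp
qed

lemma subst_pvar_id: "subst pvar p = p"
  by (simp add: subst_def mev_pvar single_eq_pconst[symmetric] poly_expand[symmetric])

lemma subst_diff_dvd:
  assumes "\<And>v. d dvd pvar v - \<sigma> v"
  shows "d dvd p - subst \<sigma> (p::'k::comm_ring_1 bipoly)"
proof -
  have "p - subst \<sigma> p = (\<Sum>m\<in>ks p. pconst (lk p m) * (mev pvar m - mev \<sigma> m))"
    by (subst (1) poly_expand') (simp add: subst_def mev_pvar algebra_simps sum_subtractf)
  moreover have "d dvd mev pvar m - mev \<sigma> m" for m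
    unfolding mev_def by (intro dvd_diff_mult dvd_diff_power assms)
  ultimately show ?thesis by (auto intro!: dvd_sum)
qed

definition xonly :: "'k::comm_ring_1 bipoly \<Rightarrow> bool" where
  "xonly p \<longleftrightarrow> (\<forall>m\<in>ks p. lk m Y0 = 0 \<and> lk m Y1 = 0)"
definition yonly :: "'k::comm_ring_1 bipoly \<Rightarrow> bool" where
  "yonly p \<longleftrightarrow> (\<forall>m\<in>ks p. lk m X0 = 0 \<and> lk m X1 = 0)"

lemma bihom_xonly: "p \<in> bihom i 0 \<Longrightarrow> xonly p"
  by (auto simp: bihom_iff xonly_def bdy_def)
lemma bihom_yonly: "p \<in> bihom 0 j \<Longrightarrow> yonly p"
  by (auto simp: bihom_iff yonly_def bdx_def)

lemma xonly_0[simp]: "xonly 0" and yonly_0[simp]: "yonly 0"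
  by (simp_all add: xonly_def yonly_def)
lemma xonly_pconst[simp]: "xonly (pconst c)" and yonly_pconst[simp]: "yonly (pconst c)"
  using keys_pconst[of c] by (auto simp: xonly_def yonly_def)
lemma xonly_add: "xonly p \<Longrightarrow> xonly q \<Longrightarrow> xonly (p + q)"
  using keys_add[of p q] by (auto simp: xonly_def)
lemma yonly_add: "yonly p \<Longrightarrow> yonly q \<Longrightarrow> yonly (p + q)"
  using keys_add[of p q] by (auto simp: yonly_def)
lemma xonly_mult: "xonly p \<Longrightarrow> xonly q \<Longrightarrow> xonly (p * q)"
  using keys_mult[of p q] by (auto simp: xonly_def lookup_add)
lemma yonly_mult: "yonly p \<Longrightarrow> yonly q \<Longrightarrow> yonly (p * q)"
  using keys_mult[of p q] by (auto simp: yonly_def lookup_add)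
lemma xonly_power: "xonly p \<Longrightarrow> xonly (p ^ n)"
  by (induct n) (auto intro: xonly_mult simp del: pconst_1 simp: pconst_1[symmetric])
lemma yonly_power: "yonly p \<Longrightarrow> yonly (p ^ n)"
  by (induct n) (auto intro: yonly_mult simp del: pconst_1 simp: pconst_1[symmetric])
lemma xonly_sum: "(\<And>x. x \<in> S \<Longrightarrow> xonly (f x)) \<Longrightarrow> xonly (sum f S)"
  by (induct S rule: infinite_finite_induct) (auto intro: xonly_add)
lemma yonly_sum: "(\<And>x. x \<in> S \<Longrightarrow> yonly (f x)) \<Longrightarrow> yonly (sum f S)"
  by (induct S rule: infinite_finite_induct) (auto intro: yonly_add)
lemma xonly_prod: "(\<And>x. x \<in> S \<Longrightarrow> xonly (f x)) \<Longrightarrow> xonly (prod f S)"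
  by (induct S rule: infinite_finite_induct) (auto intro: xonly_mult simp del: pconst_1 simp: pconst_1[symmetric])
lemma yonly_prod: "(\<And>x. x \<in> S \<Longrightarrow> yonly (f x)) \<Longrightarrow> yonly (prod f S)"
  by (induct S rule: infinite_finite_induct) (auto intro: yonly_mult simp del: pconst_1 simp: pconst_1[symmetric])
lemma xonly_pvar: "xonly (pvar X0)" "xonly (pvar X1)"
  by (simp_all add: xonly_def keys_pvar lookup_single)
lemma yonly_pvar: "yonly (pvar Y0)" "yonly (pvar Y1)"
  by (simp_all add: yonly_def keys_pvar lookup_single)

lemma subst_fix_xonly:
  assumes "\<sigma> X0 = pvar X0" "\<sigma> X1 = pvar X1" "xonly p"
  shows "subst \<sigma> p = p"
proof -
  have "mev \<sigma> m = mev pvar m" if "m \<in> ks p" for m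
    using assms that by (simp add: mev_def xonly_def)
  then show ?thesis
    by (simp add: subst_def mev_pvar single_eq_pconst[symmetric] poly_expand[symmetric] cong: sum.cong)
qed

lemma subst_fix_yonly:
  assumes "\<sigma> Y0 = pvar Y0" "\<sigma> Y1 = pvar Y1" "yonly p"
  shows "subst \<sigma> p = p"
proof -
  have "mev \<sigma> m = mev pvar m" if "m \<in> ks p" for m
    using assms that by (simp add: mev_def yonly_def)
  then show ?thesis
    by (simp add: subst_def mev_pvar single_eq_pconst[symmetric] poly_expand[symmetric] cong: sum.cong)
qed

lemma subst_xonly:
  assumes "xonly (\<sigma> X0)" "xonly (\<sigma> X1)" "xonly p"
  shows "xonly (subst \<sigma> p)"
proof -
  have "xonly (mev \<sigma> m)" if "m \<in> ks p" for m
    using assms that by (simp add: mev_def xonly_def[of p] xonly_mult xonly_power)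
  then show ?thesis unfolding subst_def by (auto intro!: xonly_sum xonly_mult)
qed

lemma subst_yonly:
  assumes "yonly (\<sigma> Y0)" "yonly (\<sigma> Y1)" "yonly p"
  shows "yonly (subst \<sigma> p)"
proof -
  have "yonly (mev \<sigma> m)" if "m \<in> ks p" for m
    using assms that by (simp add: mev_def yonly_def[of p] yonly_mult yonly_power)
  then show ?thesis unfolding subst_def by (auto intro!: yonly_sum yonly_mult)
qed

definition isprime :: "'a::comm_ring_1 \<Rightarrow> bool" where
  "isprime p \<longleftrightarrow> p \<noteq> 0 \<and> \<not> p dvd 1 \<and> (\<forall>a b. p dvd a * b \<longrightarrow> p dvd a \<or> p dvd b)"

lemma prime_dvd_power: "isprime p \<Longrightarrow> p dvd a ^ n \<Longrightarrow> p dvd a"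
proof (induct n)
  case 0 then have "p dvd 1" by simp
  then show ?case using one_dvd dvd_trans by blast
next
  case (Suc n) then show ?case unfolding isprime_def by auto
qed

lemma prime_not_dvd_mult: "isprime p \<Longrightarrow> \<not> p dvd a \<Longrightarrow> \<not> p dvd b \<Longrightarrow> \<not> p dvd a * b"
  unfolding isprime_def by blast

lemma prime_not_dvd_power: "isprime p \<Longrightarrow> \<not> p dvd a \<Longrightarrow> \<not> p dvd a ^ n"
  using prime_dvd_power by blast

lemma prime_not_dvd_prod: "isprime p \<Longrightarrow> (\<And>x. x \<in> S \<Longrightarrow> \<not> p dvd f x) \<Longrightarrow> \<not> p dvd prod f S"
proof (induct S rule: infinite_finite_induct)
  case (infinite S) then show ?case by (simp add: isprime_def)
next
  case empty then show ?case by (simp add: isprime_def)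
next
  case (insert x F) then show ?case using prime_not_dvd_mult[of p "f x" "prod f F"] by auto
qed

lemma coprime_pow_dvd:
  fixes p :: "'a::idom"
  assumes "isprime p" "\<not> p dvd q" "p ^ e dvd q * s"
  shows "p ^ e dvd s"
  using assms(3)
proof (induct e arbitrary: s)
  case 0 then show ?case by simp
next
  case (Suc e)
  then have "p dvd q * s" by (metis dvd_mult_left power_Suc)
  then have "p dvd s" using assms(1,2) unfolding isprime_def by blast
  then obtain s' where s': "s = p * s'" by blast
  have "p * p ^ e dvd p * (q * s')" using Suc.prems s' by (simp add: algebra_simps)
  then have "p ^ e dvd q * s'" using assms(1) unfolding isprime_def by simp
  then have "p ^ e dvd s'" by (rule Suc.hyps)
  then show ?case using s' by simp
qed

lemma prod_pow_dvd:
  fixes u :: "'b \<Rightarrow> 'a::idom"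
  assumes "finite S" "\<And>j. j \<in> S \<Longrightarrow> isprime (u j)"
    "\<And>j j'. j \<in> S \<Longrightarrow> j' \<in> S \<Longrightarrow> j \<noteq> j' \<Longrightarrow> \<not> u j dvd u j'"
    "\<And>j. j \<in> S \<Longrightarrow> u j ^ e j dvd t"
  shows "(\<Prod>j\<in>S. u j ^ e j) dvd t"
  using assms
proof (induct S rule: finite_induct)
  case empty then show ?case by simp
next
  case (insert x F)
  then have "(\<Prod>j\<in>F. u j ^ e j) dvd t" by auto
  then obtain s where s: "t = (\<Prod>j\<in>F. u j ^ e j) * s" by blast
  have np: "\<not> u x dvd (\<Prod>j\<in>F. u j ^ e j)"
    using insert by (intro prime_not_dvd_prod prime_not_dvd_power) auto
  have "u x ^ e x dvd t" using insert.prems(3) by simp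
  then have "u x ^ e x dvd (\<Prod>j\<in>F. u j ^ e j) * s" using s by simp
  then have "u x ^ e x dvd s"
    using coprime_pow_dvd[OF _ np] insert.prems(1) by blast
  then have "(\<Prod>j\<in>F. u j ^ e j) * u x ^ e x dvd (\<Prod>j\<in>F. u j ^ e j) * s"
    by (rule mult_dvd_mono[OF dvd_refl])
  then show ?case using insert.hyps s by (simp add: mult.commute)
qed

definition lamx :: "'k \<times> 'k \<Rightarrow> 'k::field bipoly" where
  "lamx A = pconst (snd A) * pvar X0 - pconst (fst A) * pvar X1"
definition lamy :: "'k \<times> 'k \<Rightarrow> 'k::field bipoly" where
  "lamy B = pconst (snd B) * pvar Y0 - pconst (fst B) * pvar Y1"

definition killx :: "'k \<times> 'k \<Rightarrow> var \<Rightarrow> 'k::field bipoly" where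
  "killx A v = (if snd A \<noteq> 0 then (if v = X0 then pconst (fst A / snd A) * pvar X1 else pvar v)
                else (if v = X1 then 0 else pvar v))"
definition killy :: "'k \<times> 'k \<Rightarrow> var \<Rightarrow> 'k::field bipoly" where
  "killy B v = (if snd B \<noteq> 0 then (if v = Y0 then pconst (fst B / snd B) * pvar Y1 else pvar v)
                else (if v = Y1 then 0 else pvar v))"

definition nux :: "'k \<times> 'k \<Rightarrow> 'k::field bipoly" where
  "nux A = (if snd A \<noteq> 0 then pvar X1 else pvar X0)"

lemma single_key_eq: "sg a (1::nat) = sg b 1 \<longleftrightarrow> a = b"
  by (metis lookup_single_eq lookup_single_not_eq one_neq_zero)

lemma single_key_eq'[simp]: "n \<noteq> 0 \<Longrightarrow> sg a (n::nat) = sg b n \<longleftrightarrow> a = b"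
  by (metis lookup_single_eq lookup_single_not_eq)

lemma lookup_pconst_pvar: "lk (pconst c * pvar v :: 'k::comm_ring_1 bipoly) m = (if m = sg v 1 then c else 0)"
  by (simp add: pconst_def pvar_def mult_single lookup_single when_def eq_commute)

lemma pconst_pvar_nz: "c \<noteq> 0 \<Longrightarrow> pconst c * pvar v \<noteq> (0::'k::field bipoly)"
  by (metis lookup_pconst_pvar lookup_zero)

lemma pvar_nz[simp]: "pvar v \<noteq> (0::'k::field bipoly)"
  using pconst_pvar_nz[of 1 v] by simp

lemma killx_dvd:
  assumes "proj_pt A"
  shows "lamx A dvd pvar v - killx A v"
proof (cases "snd A \<noteq> 0")
  case True
  have "pconst (inverse (snd A)) * lamx A = pconst (inverse (snd A) * snd A) * pvar X0 - pconst (inverse (snd A) * fst A) * pvar X1"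
    by (simp add: lamx_def pconst_mult algebra_simps)
  also have "\<dots> = pvar X0 - pconst (fst A / snd A) * pvar X1"
    using True by (simp add: field_simps)
  finally have "lamx A dvd pvar X0 - pconst (fst A / snd A) * pvar X1" by (metis dvd_triv_right)
  then show ?thesis using True by (cases v) (simp_all add: killx_def)
next
  case False
  then have a0: "fst A \<noteq> 0" using assms by (cases A) (auto simp: proj_pt_def)
  have "pconst (- inverse (fst A)) * lamx A = pconst (inverse (fst A) * fst A) * pvar X1"
    using False by (simp add: lamx_def pconst_mult pconst_uminus algebra_simps)
  also have "\<dots> = pvar X1" using a0 by simp
  finally have "lamx A dvd pvar X1" by (metis dvd_triv_right)
  then show ?thesis using False by (cases v) (simp_all add: killx_def)
qed

lemma killy_dvd:
  assumes "proj_pt B"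
  shows "lamy B dvd pvar v - killy B v"
proof (cases "snd B \<noteq> 0")
  case True
  have "pconst (inverse (snd B)) * lamy B = pconst (inverse (snd B) * snd B) * pvar Y0 - pconst (inverse (snd B) * fst B) * pvar Y1"
    by (simp add: lamy_def pconst_mult algebra_simps)
  also have "\<dots> = pvar Y0 - pconst (fst B / snd B) * pvar Y1"
    using True by (simp add: field_simps)
  finally have "lamy B dvd pvar Y0 - pconst (fst B / snd B) * pvar Y1" by (metis dvd_triv_right)
  then show ?thesis using True by (cases v) (simp_all add: killy_def)
next
  case False
  then have a0: "fst B \<noteq> 0" using assms by (cases B) (auto simp: proj_pt_def)
  have "pconst (- inverse (fst B)) * lamy B = pconst (inverse (fst B) * fst B) * pvar Y1"
    using False by (simp add: lamy_def pconst_mult pconst_uminus algebra_simps)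
  also have "\<dots> = pvar Y1" using a0 by simp
  finally have "lamy B dvd pvar Y1" by (metis dvd_triv_right)
  then show ?thesis using False by (cases v) (simp_all add: killy_def)
qed

lemma subst_killx_lamx: "subst (killx A) (lamx A) = 0"
  by (cases "snd A = 0") (simp_all add: lamx_def killx_def subst_diff subst_uminus subst_mult pconst_mult[symmetric] mult.assoc[symmetric])

lemma subst_killy_lamy: "subst (killy B) (lamy B) = 0"
  by (cases "snd B = 0") (simp_all add: lamy_def killy_def subst_diff subst_uminus subst_mult pconst_mult[symmetric] mult.assoc[symmetric])

lemma lamx_dvd_iff: "proj_pt A \<Longrightarrow> lamx A dvd p \<longleftrightarrow> subst (killx A) p = 0"
proof
  assume "lamx A dvd p" then obtain q where "p = lamx A * q" by blast
  then show "subst (killx A) p = 0" by (simp add: subst_mult subst_killx_lamx)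
next
  assume "proj_pt A" "subst (killx A) p = 0"
  then show "lamx A dvd p" using subst_diff_dvd[of "lamx A" "killx A" p, OF killx_dvd] by auto
qed

lemma lamy_dvd_iff: "proj_pt B \<Longrightarrow> lamy B dvd p \<longleftrightarrow> subst (killy B) p = 0"
proof
  assume "lamy B dvd p" then obtain q where "p = lamy B * q" by blast
  then show "subst (killy B) p = 0" by (simp add: subst_mult subst_killy_lamy)
next
  assume "proj_pt B" "subst (killy B) p = 0"
  then show "lamy B dvd p" using subst_diff_dvd[of "lamy B" "killy B" p, OF killy_dvd] by auto
qed

lemma killx_fix: "killx A Y0 = pvar Y0" "killx A Y1 = pvar Y1"
  by (simp_all add: killx_def)
lemma killy_fix: "killy B X0 = pvar X0" "killy B X1 = pvar X1"
  by (simp_all add: killy_def)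
lemma killx_xonly: "xonly (killx A X0)" "xonly (killx A X1)"
  by (simp_all add: killx_def xonly_pvar xonly_mult)
lemma killy_yonly: "yonly (killy B Y0)" "yonly (killy B Y1)"
  by (simp_all add: killy_def yonly_pvar yonly_mult)

lemma subst_killx_yonly: "yonly p \<Longrightarrow> subst (killx A) p = p"
  by (rule subst_fix_yonly) (simp_all add: killx_fix)
lemma subst_killy_xonly: "xonly p \<Longrightarrow> subst (killy B) p = p"
  by (rule subst_fix_xonly) (simp_all add: killy_fix)
lemma subst_killx_xonly: "xonly p \<Longrightarrow> xonly (subst (killx A) p)"
  by (rule subst_xonly) (simp_all add: killx_xonly)
lemma subst_killy_yonly: "yonly p \<Longrightarrow> yonly (subst (killy B) p)"
  by (rule subst_yonly) (simp_all add: killy_yonly)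

lemma lamx_nz: "proj_pt A \<Longrightarrow> lamx A \<noteq> 0"
proof
  assume "proj_pt A" "lamx A = 0"
  then have "lk (lamx A) (sg X0 1) = 0" "lk (lamx A) (sg X1 1) = 0" by simp_all
  then have "snd A = 0" "fst A = 0"
    by (simp_all add: lamx_def lookup_minus lookup_pconst_pvar single_key_eq)
  then show False using \<open>proj_pt A\<close> by (cases A) (simp add: proj_pt_def)
qed

lemma lamy_nz: "proj_pt B \<Longrightarrow> lamy B \<noteq> 0"
proof
  assume "proj_pt B" "lamy B = 0"
  then have "lk (lamy B) (sg Y0 1) = 0" "lk (lamy B) (sg Y1 1) = 0" by simp_all
  then have "snd B = 0" "fst B = 0"
    by (simp_all add: lamy_def lookup_minus lookup_pconst_pvar single_key_eq)
  then show False using \<open>proj_pt B\<close> by (cases B) (simp add: proj_pt_def)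
qed

lemma isprime_lamx: assumes "proj_pt A" shows "isprime (lamx A)"
  unfolding isprime_def using lamx_nz[OF assms] by (auto simp: lamx_dvd_iff[OF assms] subst_mult)
lemma isprime_lamy: assumes "proj_pt B" shows "isprime (lamy B)"
  unfolding isprime_def using lamy_nz[OF assms] by (auto simp: lamy_dvd_iff[OF assms] subst_mult)

lemma lamx_not_dvd_yonly: "proj_pt A \<Longrightarrow> yonly q \<Longrightarrow> q \<noteq> 0 \<Longrightarrow> \<not> lamx A dvd q"
  by (simp add: lamx_dvd_iff subst_killx_yonly)
lemma lamy_not_dvd_xonly: "proj_pt B \<Longrightarrow> xonly q \<Longrightarrow> q \<noteq> 0 \<Longrightarrow> \<not> lamy B dvd q"
  by (simp add: lamy_dvd_iff subst_killy_xonly)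

lemma lamx_xonly: "xonly (lamx A)"
  by (simp add: lamx_def xonly_add xonly_mult xonly_pvar diff_conv_add_uminus pconst_uminus[symmetric] mult_minus_left[symmetric] del: mult_minus_left)
lemma lamy_yonly: "yonly (lamy B)"
  by (simp add: lamy_def yonly_add yonly_mult yonly_pvar diff_conv_add_uminus pconst_uminus[symmetric] mult_minus_left[symmetric] del: mult_minus_left)

lemma lamx_bihom: "lamx A \<in> bihom 1 0"
  unfolding lamx_def by (intro bihom_diff bihom_cmult pvar_bihom)
lemma lamy_bihom: "lamy B \<in> bihom 0 1"
  unfolding lamy_def by (intro bihom_diff bihom_cmult pvar_bihom)
lemma nux_bihom: "nux A \<in> bihom 1 0"
  by (simp add: nux_def bihom_iff keys_pvar bdx_def bdy_def lookup_single)
lemma nux_xonly: "xonly (nux A)"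
  by (simp add: nux_def xonly_pvar)

lemma lamx_not_dvd_nux: "proj_pt A \<Longrightarrow> \<not> lamx A dvd nux A"
  by (simp add: lamx_dvd_iff nux_def killx_def)

lemma lamx_not_dvd_lamy: "proj_pt A \<Longrightarrow> proj_pt B \<Longrightarrow> \<not> lamx A dvd lamy B"
  by (simp add: lamx_not_dvd_yonly lamy_yonly lamy_nz)
lemma lamy_not_dvd_lamx: "proj_pt A \<Longrightarrow> proj_pt B \<Longrightarrow> \<not> lamy B dvd lamx A"
  by (simp add: lamy_not_dvd_xonly lamx_xonly lamx_nz)

lemma lamx_distinct:
  assumes "proj_pt A" "proj_pt A'" "proj_distinct A A'"
  shows "\<not> lamx A dvd lamx A'"
proof (cases "snd A \<noteq> 0")
  case True
  have "subst (killx A) (lamx A') = pconst (snd A') * (pconst (fst A / snd A) * pvar X1) - pconst (fst A') * pvar X1"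
    using True by (simp add: lamx_def killx_def subst_diff subst_mult)
  also have "\<dots> = pconst (snd A' * (fst A / snd A) - fst A') * pvar X1"
    by (simp only: pconst_mult pconst_diff algebra_simps)
  finally have "subst (killx A) (lamx A') = pconst (snd A' * (fst A / snd A) - fst A') * pvar X1" .
  moreover have "snd A' * (fst A / snd A) - fst A' \<noteq> 0"
    using True assms(3) by (auto simp: proj_distinct_def field_simps)
  ultimately show ?thesis using assms(1) by (simp add: lamx_dvd_iff pconst_pvar_nz)
next
  case False
  have "subst (killx A) (lamx A') = pconst (snd A') * pvar X0"
    using False by (simp add: lamx_def killx_def subst_diff subst_mult)
  moreover have "snd A' \<noteq> 0" using False assms(3) by (auto simp: proj_distinct_def)
  ultimately show ?thesis using assms(1) by (simp add: lamx_dvd_iff pconst_pvar_nz)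
qed

lemma lamy_distinct:
  assumes "proj_pt B" "proj_pt B'" "proj_distinct B B'"
  shows "\<not> lamy B dvd lamy B'"
proof (cases "snd B \<noteq> 0")
  case True
  have "subst (killy B) (lamy B') = pconst (snd B') * (pconst (fst B / snd B) * pvar Y1) - pconst (fst B') * pvar Y1"
    using True by (simp add: lamy_def killy_def subst_diff subst_mult)
  also have "\<dots> = pconst (snd B' * (fst B / snd B) - fst B') * pvar Y1"
    by (simp only: pconst_mult pconst_diff algebra_simps)
  finally have "subst (killy B) (lamy B') = pconst (snd B' * (fst B / snd B) - fst B') * pvar Y1" .
  moreover have "snd B' * (fst B / snd B) - fst B' \<noteq> 0"
    using True assms(3) by (auto simp: proj_distinct_def field_simps)
  ultimately show ?thesis using assms(1) by (simp add: lamy_dvd_iff pconst_pvar_nz)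
next
  case False
  have "subst (killy B) (lamy B') = pconst (snd B') * pvar Y0"
    using False by (simp add: lamy_def killy_def subst_diff subst_mult)
  moreover have "snd B' \<noteq> 0" using False assms(3) by (auto simp: proj_distinct_def)
  ultimately show ?thesis using assms(1) by (simp add: lamy_dvd_iff pconst_pvar_nz)
qed

definition Jset :: "'k::comm_ring_1 bipoly \<Rightarrow> 'k bipoly \<Rightarrow> nat \<Rightarrow> 'k bipoly set" where
  "Jset l u m = {(\<Sum>c\<le>m. l ^ c * u ^ (m - c) * H c) | H. True}"

lemma Jset_add: "a \<in> Jset l u m \<Longrightarrow> b \<in> Jset l u m \<Longrightarrow> a + b \<in> Jset l u m"
proof -
  assume "a \<in> Jset l u m" "b \<in> Jset l u m"
  then obtain H1 H2 where "a = (\<Sum>c\<le>m. l ^ c * u ^ (m - c) * H1 c)" "b = (\<Sum>c\<le>m. l ^ c * u ^ (m - c) * H2 c)"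
    by (auto simp: Jset_def)
  then have "a + b = (\<Sum>c\<le>m. l ^ c * u ^ (m - c) * (H1 c + H2 c))"
    by (simp add: sum.distrib algebra_simps)
  then show ?thesis by (auto simp: Jset_def)
qed

lemma Jset_mult: "a \<in> Jset l u m \<Longrightarrow> q * a \<in> Jset l u m"
proof -
  assume "a \<in> Jset l u m"
  then obtain H where "a = (\<Sum>c\<le>m. l ^ c * u ^ (m - c) * H c)" by (auto simp: Jset_def)
  then have "q * a = (\<Sum>c\<le>m. l ^ c * u ^ (m - c) * (q * H c))"
    by (simp add: sum_distrib_left algebra_simps)
  then show ?thesis by (auto simp: Jset_def)
qed

lemma Jset_0: "0 \<in> Jset l u m"
  using Jset_mult[of _ l u m 0] by (auto simp: Jset_def)

lemma Jset_uminus: "a \<in> Jset l u m \<Longrightarrow> - a \<in> Jset l u m"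
  using Jset_mult[of a l u m "-1"] by simp

lemma Jset_diff: "a \<in> Jset l u m \<Longrightarrow> b \<in> Jset l u m \<Longrightarrow> a - b \<in> Jset l u m"
  using Jset_add[of a l u m "-b"] Jset_uminus[of b] by simp

lemma Jset_sum: "(\<And>x. x \<in> S \<Longrightarrow> f x \<in> Jset l u m) \<Longrightarrow> sum f S \<in> Jset l u m"
  by (induct S rule: infinite_finite_induct) (auto intro: Jset_add Jset_0)

lemma Jset_gen: "c \<le> m \<Longrightarrow> l ^ c * u ^ (m - c) * X \<in> Jset l u m"
proof -
  assume c: "c \<le> m"
  have "(\<Sum>c'\<le>m. l ^ c' * u ^ (m - c') * (if c' = c then X else 0)) = (\<Sum>c'\<le>m. if c' = c then l ^ c * u ^ (m - c) * X else 0)"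
    by (rule sum.cong) auto
  also have "\<dots> = l ^ c * u ^ (m - c) * X" using c by simp
  finally show ?thesis unfolding Jset_def by (intro CollectI exI[of _ "\<lambda>c'. if c' = c then X else 0"]) simp
qed

lemma Jset_dvd: "c \<le> m \<Longrightarrow> l ^ c * u ^ (m - c) dvd f \<Longrightarrow> f \<in> Jset l u m"
  using Jset_gen by (auto elim!: dvdE)

lemma Jset_split:
  assumes "f \<in> Jset l u (Suc m)"
  shows "\<exists>H0 K. f = u ^ Suc m * H0 + l * K \<and> K \<in> Jset l u m"
proof -
  obtain H where H: "f = (\<Sum>c\<le>Suc m. l ^ c * u ^ (Suc m - c) * H c)" using assms by (auto simp: Jset_def)
  also have "\<dots> = u ^ Suc m * H 0 + (\<Sum>c\<le>m. l ^ Suc c * u ^ (Suc m - Suc c) * H (Suc c))"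
    by (subst sum.atMost_Suc_shift) simp
  also have "\<dots> = u ^ Suc m * H 0 + l * (\<Sum>c\<le>m. l ^ c * u ^ (m - c) * H (Suc c))"
    by (simp add: sum_distrib_left algebra_simps)
  finally show ?thesis unfolding Jset_def
    by (intro exI[of _ "H 0"] exI[of _ "(\<Sum>c\<le>m. l ^ c * u ^ (m - c) * H (Suc c))"]) auto
qed

lemma Jset_mult_l: "p \<in> Jset l u n \<Longrightarrow> l * p \<in> Jset l u (Suc n)"
proof -
  assume "p \<in> Jset l u n"
  then obtain H where "p = (\<Sum>c\<le>n. l ^ c * u ^ (n - c) * H c)" by (auto simp: Jset_def)
  then have "l * p = (\<Sum>c\<le>n. l ^ Suc c * u ^ (Suc n - Suc c) * H c)"
    by (simp add: sum_distrib_left algebra_simps)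
  also have "\<dots> \<in> Jset l u (Suc n)" by (intro Jset_sum Jset_gen) auto
  finally show ?thesis .
qed

lemma Jset_mult_u: "p \<in> Jset l u n \<Longrightarrow> u * p \<in> Jset l u (Suc n)"
proof -
  assume "p \<in> Jset l u n"
  then obtain H where "p = (\<Sum>c\<le>n. l ^ c * u ^ (n - c) * H c)" by (auto simp: Jset_def)
  then have "u * p = (\<Sum>c\<le>n. l ^ c * (u * u ^ (n - c)) * H c)"
    by (simp add: sum_distrib_left algebra_simps)
  also have "\<dots> = (\<Sum>c\<le>n. l ^ c * u ^ (Suc n - c) * H c)"
    by (rule sum.cong) (auto simp: Suc_diff_le)
  also have "\<dots> \<in> Jset l u (Suc n)" by (intro Jset_sum Jset_gen) auto
  finally show ?thesis .
qed

lemma Jset_colon: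
  fixes l u :: "'k::field bipoly"
  assumes "isprime l" "\<not> l dvd u" "l * F \<in> Jset l u (Suc m)"
  shows "F \<in> Jset l u m"
proof -
  obtain H0 K where HK: "l * F = u ^ Suc m * H0 + l * K" "K \<in> Jset l u m"
    using Jset_split[OF assms(3)] by blast
  have "u ^ Suc m * H0 = l * (F - K)" using HK(1) by (simp add: algebra_simps)
  then have "l dvd u ^ Suc m * H0" by simp
  moreover have "\<not> l dvd u ^ Suc m" using assms(1,2) by (rule prime_not_dvd_power)
  ultimately have "l dvd H0" using assms(1) unfolding isprime_def by blast
  then obtain H0' where H0': "H0 = l * H0'" by blast
  have "l * F = l * (u ^ Suc m * H0' + K)" using HK(1) H0' by (simp add: algebra_simps)
  then have "F = u ^ Suc m * H0' + K" using assms(1) by (simp add: isprime_def)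
  moreover have "u ^ Suc m * H0' \<in> Jset l u m"
    using Jset_gen[of 0 m l u "u * H0'"] by (simp add: algebra_simps)
  ultimately show ?thesis using HK(2) by (simp add: Jset_add)
qed

lemma ig_base: "s \<in> S \<Longrightarrow> s \<in> ideal_gen S"
  unfolding ideal_gen_def by (intro CollectI exI[of _ "{s}"] exI[of _ "\<lambda>_. 1"]) simp

lemma ig_0: "0 \<in> ideal_gen S"
  unfolding ideal_gen_def by (intro CollectI exI[of _ "{}"]) simp

lemma ig_mult: "a \<in> ideal_gen S \<Longrightarrow> q * a \<in> ideal_gen S"
proof -
  assume "a \<in> ideal_gen S"
  then obtain F c where "finite F" "F \<subseteq> S" "a = (\<Sum>f\<in>F. c f * f)" by (auto simp: ideal_gen_def)
  then show ?thesis unfolding ideal_gen_def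
    by (intro CollectI exI[of _ F] exI[of _ "\<lambda>f. q * c f"]) (simp add: sum_distrib_left algebra_simps)
qed

lemma ig_add: "a \<in> ideal_gen S \<Longrightarrow> b \<in> ideal_gen S \<Longrightarrow> a + b \<in> ideal_gen S"
proof -
  assume "a \<in> ideal_gen S" "b \<in> ideal_gen S"
  then obtain F1 c1 F2 c2 where F: "finite F1" "F1 \<subseteq> S" "a = (\<Sum>f\<in>F1. c1 f * f)"
    "finite F2" "F2 \<subseteq> S" "b = (\<Sum>f\<in>F2. c2 f * f)" by (auto simp: ideal_gen_def)
  let ?c = "\<lambda>f. (if f \<in> F1 then c1 f else 0) + (if f \<in> F2 then c2 f else 0)"
  have "?c f * f = (if f \<in> F1 then c1 f * f else 0) + (if f \<in> F2 then c2 f * f else 0)" for f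
    by (simp add: algebra_simps)
  then have "(\<Sum>f\<in>F1 \<union> F2. ?c f * f) = (\<Sum>f\<in>F1 \<union> F2. (if f \<in> F1 then c1 f * f else 0)) + (\<Sum>f\<in>F1 \<union> F2. (if f \<in> F2 then c2 f * f else 0))"
    by (simp add: sum.distrib[symmetric])
  also have "\<dots> = a + b" using F by (simp add: sum.If_cases Int_absorb1 Int_absorb2)
  finally show ?thesis unfolding ideal_gen_def using F
    by (intro CollectI exI[of _ "F1 \<union> F2"] exI[of _ ?c]) auto
qed

lemma ig_sum: "(\<And>x. x \<in> T \<Longrightarrow> f x \<in> ideal_gen S) \<Longrightarrow> sum f T \<in> ideal_gen S"
  by (induct T rule: infinite_finite_induct) (auto intro: ig_add ig_0)

lemma ig_least:
  assumes "S \<subseteq> I" "0 \<in> I" "\<And>a b. a \<in> I \<Longrightarrow> b \<in> I \<Longrightarrow> a + b \<in> I" "\<And>q a. a \<in> I \<Longrightarrow> q * a \<in> I"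
  shows "ideal_gen S \<subseteq> I"
proof
  fix p assume "p \<in> ideal_gen S"
  then obtain F c where F: "finite F" "F \<subseteq> S" "p = (\<Sum>f\<in>F. c f * f)" by (auto simp: ideal_gen_def)
  have "(\<Sum>f\<in>F. c f * f) \<in> I" using F(1,2)
    by (induct F rule: finite_induct) (use assms in auto)
  then show "p \<in> I" using F by simp
qed

lemma ig_pair: "ideal_gen {l, u} = {l * a + u * b | a b. True}"
proof
  show "ideal_gen {l, u} \<subseteq> {l * a + u * b | a b. True}"
  proof (rule ig_least)
    have "l = l * 1 + u * 0" "u = l * 0 + u * 1" by simp_all
    then show "{l, u} \<subseteq> {l * a + u * b | a b. True}" by blast
    show "0 \<in> {l * a + u * b | a b. True}" by (auto intro!: exI[of _ 0])
    show "x + y \<in> {l * a + u * b | a b. True}" if "x \<in> {l * a + u * b | a b. True}" "y \<in> {l * a + u * b | a b. True}" for x y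
      using that by clarify (rule_tac x="a + aa" in exI, rule_tac x="b + ba" in exI, simp add: algebra_simps)
    show "q * x \<in> {l * a + u * b | a b. True}" if "x \<in> {l * a + u * b | a b. True}" for q x
      using that by clarify (rule_tac x="q * a" in exI, rule_tac x="q * b" in exI, simp add: algebra_simps)
  qed
  show "{l * a + u * b | a b. True} \<subseteq> ideal_gen {l, u}"
  proof clarify
    fix a b
    have "a * l \<in> ideal_gen {l, u}" "b * u \<in> ideal_gen {l, u}"
      using ig_mult[OF ig_base[of l "{l, u}"], of a] ig_mult[OF ig_base[of u "{l, u}"], of b] by auto
    then show "l * a + u * b \<in> ideal_gen {l, u}" by (simp add: mult.commute ig_add)
  qed
qed

lemma prodlist_J:
  "set xs \<subseteq> {l * a + u * b | a b. True} \<Longrightarrow> prod_list xs \<in> Jset l u (length xs)"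
proof (induct xs)
  case Nil then show ?case using Jset_gen[of 0 0 l u 1] by simp
next
  case (Cons x xs)
  then obtain a b where x: "x = l * a + u * b" by auto
  have p: "prod_list xs \<in> Jset l u (length xs)" using Cons by auto
  have "prod_list (x # xs) = a * (l * prod_list xs) + b * (u * prod_list xs)"
    using x by (simp add: algebra_simps)
  also have "\<dots> \<in> Jset l u (length (x # xs))"
    using Jset_mult_l[OF p] Jset_mult_u[OF p] by (auto intro!: Jset_add Jset_mult)
  finally show ?case .
qed

lemma ideal_pow_Jset: "ideal_pow (ideal_gen {l, u}) m = Jset l u m"
proof
  show "ideal_pow (ideal_gen {l, u}) m \<subseteq> Jset l u m"
    unfolding ideal_pow_def
  proof (rule ig_least)
    show "{prod_list xs |xs. length xs = m \<and> set xs \<subseteq> ideal_gen {l, u}} \<subseteq> Jset l u m"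
    proof
      fix x assume "x \<in> {prod_list xs |xs. length xs = m \<and> set xs \<subseteq> ideal_gen {l, u}}"
      then obtain xs where "x = prod_list xs" "length xs = m" "set xs \<subseteq> {l * a + u * b | a b. True}"
        by (auto simp: ig_pair)
      then show "x \<in> Jset l u m" using prodlist_J by blast
    qed
  qed (auto intro: Jset_add Jset_mult Jset_0)
  show "Jset l u m \<subseteq> ideal_pow (ideal_gen {l, u}) m"
  proof
    fix f assume "f \<in> Jset l u m"
    then obtain H where H: "f = (\<Sum>c\<le>m. l ^ c * u ^ (m - c) * H c)" by (auto simp: Jset_def)
    have "l ^ c * u ^ (m - c) \<in> {prod_list xs | xs. length xs = m \<and> set xs \<subseteq> ideal_gen {l, u}}" if "c \<le> m" for c
      using that by (intro CollectI exI[of _ "replicate c l @ replicate (m - c) u"]) (auto intro: ig_base)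
    then have "H c * (l ^ c * u ^ (m - c)) \<in> ideal_pow (ideal_gen {l, u}) m" if "c \<le> m" for c
      using that unfolding ideal_pow_def by (intro ig_mult ig_base) auto
    then show "f \<in> ideal_pow (ideal_gen {l, u}) m"
      unfolding H ideal_pow_def by (intro ig_sum) (simp add: mult.commute ideal_pow_def)
  qed
qed

lemma point_ideal_eq: "point_ideal A B = ideal_gen {lamx A, lamy B}"
  by (simp add: point_ideal_def lamx_def lamy_def)

lemma ideal_pow_point: "ideal_pow (point_ideal A B) m = Jset (lamx A) (lamy B) m"
  by (simp add: point_ideal_eq ideal_pow_Jset)

lemma shift_sum:
  fixes l :: "'a::comm_ring_1"
  shows "(\<Sum>a<Suc n. l ^ a * w a * t a) + l ^ Suc n * G =
   w 0 * t 0 + l * ((\<Sum>a<n. l ^ a * w (Suc a) * t (Suc a)) + l ^ n * G)"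
proof -
  have "(\<Sum>a<Suc n. l ^ a * w a * t a) = w 0 * t 0 + (\<Sum>a<n. l ^ Suc a * w (Suc a) * t (Suc a))"
    by (subst sum.lessThan_Suc_shift) simp
  also have "(\<Sum>a<n. l ^ Suc a * w (Suc a) * t (Suc a)) = l * (\<Sum>a<n. l ^ a * w (Suc a) * t (Suc a))"
    by (simp add: sum_distrib_left mult.assoc)
  finally show ?thesis by (simp add: algebra_simps)
qed

lemma Z_lemma:
  assumes "proj_pt A" "\<forall>a<n. xonly (w a) \<and> \<not> lamx A dvd w a" "\<forall>a<n. yonly (t a)"
    "(\<Sum>a<n. lamx A ^ a * w a * t a) + lamx A ^ n * G = 0"
  shows "\<forall>a<n. t a = 0"
  using assms(2-4)
proof (induct n arbitrary: w t G)
  case 0 then show ?case by simp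
next
  case (Suc n)
  let ?F' = "(\<Sum>a<n. lamx A ^ a * w (Suc a) * t (Suc a)) + lamx A ^ n * G"
  have eq: "w 0 * t 0 + lamx A * ?F' = 0" using Suc.prems(3) shift_sum[where l="lamx A" and n=n and w=w and t=t and G=G] by simp
  then have "subst (killx A) (w 0 * t 0 + lamx A * ?F') = 0" by simp
  then have "subst (killx A) (w 0) * t 0 = 0"
    using Suc.prems(2) by (simp add: subst_add subst_mult subst_killx_lamx subst_killx_yonly)
  moreover have "subst (killx A) (w 0) \<noteq> 0" using Suc.prems(1) lamx_dvd_iff[OF assms(1)] by auto
  ultimately have t0: "t 0 = 0" by simp
  then have "lamx A * ?F' = 0" using eq by simp
  then have "?F' = 0" using lamx_nz[OF assms(1)] by simp
  moreover have "\<forall>a<n. xonly (w (Suc a)) \<and> \<not> lamx A dvd w (Suc a)" using Suc.prems(1) by simp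
  moreover have "\<forall>a<n. yonly (t (Suc a))" using Suc.prems(2) by simp
  ultimately have "\<forall>a<n. t (Suc a) = 0" using Suc.hyps[of "\<lambda>a. w (Suc a)" "\<lambda>a. t (Suc a)" G] by blast
  then show ?case using t0 by (auto simp: less_Suc_eq_0_disj)
qed

lemma LL_lemma:
  assumes "proj_pt A" "proj_pt B" "\<forall>a<n. xonly (w a) \<and> \<not> lamx A dvd w a" "\<forall>a<n. yonly (t a)"
    "m \<le> n" "(\<Sum>a<n. lamx A ^ a * w a * t a) + lamx A ^ n * G \<in> Jset (lamx A) (lamy B) m"
  shows "\<forall>a<m. lamy B ^ (m - a) dvd t a"
  using assms(3-6)
proof (induct m arbitrary: n w t G)
  case 0 then show ?case by simp
next
  case (Suc m)
  obtain n' where n: "n = Suc n'" using Suc.prems(3) by (cases n) auto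
  let ?l = "lamx A" and ?u = "lamy B"
  let ?F' = "(\<Sum>a<n'. ?l ^ a * w (Suc a) * t (Suc a)) + ?l ^ n' * G"
  have eq: "(\<Sum>a<n. ?l ^ a * w a * t a) + ?l ^ n * G = w 0 * t 0 + ?l * ?F'"
    using n shift_sum[where l="?l" and n=n' and w=w and t=t and G=G] by simp
  obtain H0 K where HK: "w 0 * t 0 + ?l * ?F' = ?u ^ Suc m * H0 + ?l * K"
    using Jset_split[OF Suc.prems(4)[unfolded eq]] by blast
  have "subst (killx A) (w 0 * t 0 + ?l * ?F') = subst (killx A) (?u ^ Suc m * H0 + ?l * K)"
    using HK by simp
  then have "subst (killx A) (w 0) * t 0 = ?u ^ Suc m * subst (killx A) H0"
    using Suc.prems(2) n
    by (simp add: subst_add subst_mult subst_power subst_killx_lamx subst_killx_yonly lamy_yonly)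
  then have dv: "?u ^ Suc m dvd subst (killx A) (w 0) * t 0" by simp
  have nd: "\<not> ?u dvd subst (killx A) (w 0)"
  proof (rule lamy_not_dvd_xonly[OF assms(2)])
    show "xonly (subst (killx A) (w 0))" using Suc.prems(1) n by (simp add: subst_killx_xonly)
    show "subst (killx A) (w 0) \<noteq> 0" using Suc.prems(1) n lamx_dvd_iff[OF assms(1)] by auto
  qed
  have t0: "?u ^ Suc m dvd t 0"
    by (rule coprime_pow_dvd[OF isprime_lamy[OF assms(2)] nd dv])
  then have "w 0 * t 0 \<in> Jset ?l ?u (Suc m)"
    by (intro Jset_dvd[of 0]) auto
  then have "?l * ?F' \<in> Jset ?l ?u (Suc m)"
    using Suc.prems(4)[unfolded eq] Jset_diff by fastforce
  then have "?F' \<in> Jset ?l ?u m"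
    by (rule Jset_colon[OF isprime_lamx[OF assms(1)] lamx_not_dvd_lamy[OF assms(1,2)]])
  moreover have "\<forall>a<n'. xonly (w (Suc a)) \<and> \<not> lamx A dvd w (Suc a)" using Suc.prems(1) n by simp
  moreover have "\<forall>a<n'. yonly (t (Suc a))" using Suc.prems(2) n by simp
  moreover have "m \<le> n'" using Suc.prems(3) n by simp
  ultimately have "\<forall>a<m. ?u ^ (m - a) dvd t (Suc a)"
    using Suc.hyps[of n' "\<lambda>a. w (Suc a)" "\<lambda>a. t (Suc a)" G] by blast
  then show ?case using t0 by (auto simp: less_Suc_eq_0_disj)
qed

definition fam_indep :: "'i set \<Rightarrow> ('i \<Rightarrow> 'k::field bipoly) \<Rightarrow> bool" where
  "fam_indep I e \<longleftrightarrow> (\<forall>c. (\<Sum>i\<in>I. pconst (c i) * e i) = 0 \<longrightarrow> (\<forall>i\<in>I. c i = 0))"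

definition fam_basis :: "'k::field bipoly set \<Rightarrow> 'i set \<Rightarrow> ('i \<Rightarrow> 'k bipoly) \<Rightarrow> bool" where
  "fam_basis V I e \<longleftrightarrow> finite I \<and> fam_indep I e \<and> e ` I \<subseteq> V \<and>
     (\<forall>v\<in>V. \<exists>c. v = (\<Sum>i\<in>I. pconst (c i) * e i))"

lemma fam_indep_inj:
  fixes e :: "'i \<Rightarrow> 'k::field bipoly"
  assumes "finite I" "fam_indep I e"
  shows "inj_on e I"
proof
  fix a b assume ab: "a \<in> I" "b \<in> I" "e a = e b"
  show "a = b"
  proof (rule ccontr)
    assume "a \<noteq> b"
    let ?c = "\<lambda>i. if i = a then 1 else if i = b then -1 else (0::'k)"
    have "(\<Sum>i\<in>I. pconst (?c i) * e i) = (\<Sum>i\<in>I. (if i = a then e a else 0) + (if i = b then - e b else 0))"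
      using \<open>a \<noteq> b\<close> by (intro sum.cong) (auto simp: pconst_uminus)
    also have "\<dots> = 0" using ab assms(1) by (simp add: sum.distrib)
    finally have S0: "(\<Sum>i\<in>I. pconst (?c i) * e i) = 0" .
    have H: "\<And>c. (\<Sum>i\<in>I. pconst (c i) * e i) = 0 \<Longrightarrow> \<forall>i\<in>I. c i = 0"
      using assms(2) unfolding fam_indep_def by blast
    have "?c a = 0" using H[OF S0] ab by blast
    then show False by simp
  qed
qed

lemma fam_indep_independent:
  fixes e :: "'i \<Rightarrow> 'k::field bipoly"
  assumes "finite I" "fam_indep I e"
  shows "vs.independent (e ` I)"
proof (rule vs.independent_if_scalars_zero)
  show "finite (e ` I)" using assms by simp
  fix f x assume s: "(\<Sum>x\<in>e ` I. pscale (f x) x) = 0" and x: "x \<in> e ` I"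
  have inj: "inj_on e I" by (rule fam_indep_inj[OF assms])
  have S0: "(\<Sum>i\<in>I. pconst (f (e i)) * e i) = 0"
    using s by (simp add: sum.reindex[OF inj] pscale_eq)
  have H: "\<And>c. (\<Sum>i\<in>I. pconst (c i) * e i) = 0 \<Longrightarrow> \<forall>i\<in>I. c i = 0"
    using assms(2) unfolding fam_indep_def by blast
  have "\<forall>i\<in>I. f (e i) = 0" by (rule H[OF S0])
  then show "f x = 0" using x by auto
qed

lemma comb_in_span: "(\<Sum>i\<in>I. pconst (c i) * e i) \<in> vs.span (e ` I)"
  by (intro vs.span_sum) (simp add: pscale_eq[symmetric] vs.span_scale vs.span_base)

lemma fam_basis_dim:
  assumes "fam_basis V I e"
  shows "vs.dim V = card I"
proof (rule vs.dim_unique)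
  have fi: "finite I" "fam_indep I e" using assms by (auto simp: fam_basis_def)
  show "e ` I \<subseteq> V" using assms by (auto simp: fam_basis_def)
  show "V \<subseteq> vs.span (e ` I)" using assms comb_in_span unfolding fam_basis_def by fastforce
  show "vs.independent (e ` I)" by (rule fam_indep_independent[OF fi])
  show "card (e ` I) = card I" by (rule card_image[OF fam_indep_inj[OF fi]])
qed

lemma lookup_monos:
  "lk (\<Sum>q\<in>Q. pconst (c q) * sg (M q) 1 :: 'k::comm_ring_1 bipoly) m = (\<Sum>q\<in>Q. if M q = m then c q else 0)"
  by (simp add: lookup_sum single_eq_pconst[symmetric] lookup_single when_def)

lemma monos_indep:
  assumes "finite Q" "inj_on M Q"
  shows "fam_indep Q (\<lambda>q. sg (M q) 1 :: 'k::field bipoly)"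
  unfolding fam_indep_def
proof (intro allI impI ballI)
  fix c q assume s: "(\<Sum>q\<in>Q. pconst (c q) * sg (M q) 1 :: 'k bipoly) = 0" and q: "q \<in> Q"
  have "0 = lk (\<Sum>q\<in>Q. pconst (c q) * sg (M q) 1 :: 'k bipoly) (M q)" using s by simp
  also have "\<dots> = (\<Sum>q'\<in>Q. if q' = q then c q' else 0)"
    unfolding lookup_monos using assms(2) q by (intro sum.cong) (auto dest: inj_onD)
  also have "\<dots> = c q" using assms(1) q by simp
  finally show "c q = 0" by simp
qed

lemma monos_span:
  assumes "finite Q" "inj_on M Q" "ks f \<subseteq> M ` Q"
  shows "f = (\<Sum>q\<in>Q. pconst (lk f (M q)) * sg (M q) 1 :: 'k::comm_ring_1 bipoly)"
proof (rule poly_mapping_eqI)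
  fix m
  show "lk f m = lk (\<Sum>q\<in>Q. pconst (lk f (M q)) * sg (M q) 1 :: 'k bipoly) m"
  proof (cases "m \<in> M ` Q")
    case True
    then obtain q where q: "q \<in> Q" "m = M q" by blast
    have "(\<Sum>q'\<in>Q. if M q' = m then lk f (M q') else 0) = (\<Sum>q'\<in>Q. if q' = q then lk f m else 0)"
      using assms(2) q by (intro sum.cong) (auto dest: inj_onD)
    then show ?thesis using assms(1) q by (simp add: lookup_monos)
  next
    case False
    then have "lk f m = 0" using assms(3) by (auto simp: in_keys_iff)
    moreover have "(\<Sum>q'\<in>Q. if M q' = m then lk f (M q') else 0) = 0" using False by (intro sum.neutral) auto
    ultimately show ?thesis by (simp add: lookup_monos)
  qed
qed

definition ymon :: "nat \<Rightarrow> nat \<Rightarrow> mon" where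
  "ymon j q = sg Y0 (j - q) + sg Y1 q"
definition ym :: "nat \<Rightarrow> nat \<Rightarrow> 'k::comm_ring_1 bipoly" where
  "ym j q = sg (ymon j q) 1"
definition bmon :: "nat \<Rightarrow> nat \<Rightarrow> nat \<times> nat \<Rightarrow> mon" where
  "bmon i j pq = sg X0 (i - fst pq) + sg X1 (fst pq) + sg Y0 (j - snd pq) + sg Y1 (snd pq)"

lemma ymon_inj: "inj_on (ymon j) {..j}"
  by (rule inj_onI) (metis lookup_add lookup_single_eq lookup_single_not_eq var.distinct(11) add_0 ymon_def)

lemma bmon_inj: "inj_on (bmon i j) ({..i} \<times> {..j})"
proof (rule inj_onI)
  fix x y assume "bmon i j x = bmon i j y"
  then have "lk (bmon i j x) X1 = lk (bmon i j y) X1" "lk (bmon i j x) Y1 = lk (bmon i j y) Y1" by simp_all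
  then show "x = y" by (simp add: bmon_def lookup_add lookup_single prod_eq_iff)
qed

lemma ym_bihom: "ym j q \<in> bihom 0 j" if "q \<le> j"
  using that by (simp add: ym_def ymon_def bihom_iff bdx_def bdy_def lookup_add lookup_single)

lemma bihom_0j_keys: "f \<in> bihom 0 j \<Longrightarrow> ks f \<subseteq> ymon j ` {..j}"
proof
  fix m assume "f \<in> bihom 0 j" "m \<in> ks f"
  then have "lk m X0 = 0" "lk m X1 = 0" "lk m Y0 + lk m Y1 = j" by (auto simp: bihom_iff bdx_def bdy_def)
  then have "m = ymon j (lk m Y1)"
    by (intro poly_mapping_eqI, rename_tac v, case_tac v) (auto simp: ymon_def lookup_add lookup_single)
  moreover have "lk m Y1 \<le> j" using \<open>lk m Y0 + lk m Y1 = j\<close> by simp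
  ultimately show "m \<in> ymon j ` {..j}" by blast
qed

lemma bihom_keys: "f \<in> bihom i j \<Longrightarrow> ks f \<subseteq> bmon i j ` ({..i} \<times> {..j})"
proof
  fix m assume "f \<in> bihom i j" "m \<in> ks f"
  then have "lk m X0 + lk m X1 = i" "lk m Y0 + lk m Y1 = j" by (auto simp: bihom_iff bdx_def bdy_def)
  then have "m = bmon i j (lk m X1, lk m Y1)"
    by (intro poly_mapping_eqI, rename_tac v, case_tac v) (auto simp: bmon_def lookup_add lookup_single)
  moreover have "(lk m X1, lk m Y1) \<in> {..i} \<times> {..j}" using \<open>lk m X0 + lk m X1 = i\<close> \<open>lk m Y0 + lk m Y1 = j\<close> by simp
  ultimately show "m \<in> bmon i j ` ({..i} \<times> {..j})" by blast
qed

lemma ym_indep: "fam_indep {..j} (ym j :: nat \<Rightarrow> 'k::field bipoly)"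
  unfolding ym_def by (rule monos_indep[OF _ ymon_inj]) simp

lemma ym_span: "f \<in> bihom 0 j \<Longrightarrow> \<exists>c. f = (\<Sum>q\<le>j. pconst (c q) * ym j q :: 'k::comm_ring_1 bipoly)"
  unfolding ym_def by (rule exI[of _ "\<lambda>q. lk f (ymon j q)"], rule monos_span[OF _ ymon_inj bihom_0j_keys]) auto

lemma bihom_basis: "fam_basis (bihom i j :: 'k::field bipoly set) ({..i} \<times> {..j}) (\<lambda>pq. sg (bmon i j pq) 1)"
  unfolding fam_basis_def
proof (intro conjI)
  show "finite ({..i} \<times> {..j})" by simp
  show "fam_indep ({..i} \<times> {..j}) (\<lambda>pq. sg (bmon i j pq) 1 :: 'k bipoly)"
    by (rule monos_indep[OF _ bmon_inj]) simp
  show "(\<lambda>pq. sg (bmon i j pq) 1) ` ({..i} \<times> {..j}) \<subseteq> (bihom i j :: 'k bipoly set)"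
    by (auto simp: bmon_def bihom_iff bdx_def bdy_def lookup_add lookup_single)
  show "\<forall>v\<in>bihom i j. \<exists>c. v = (\<Sum>pq\<in>{..i} \<times> {..j}. pconst (c pq) * sg (bmon i j pq) 1 :: 'k bipoly)"
    by (intro ballI, rule_tac x="\<lambda>q. lk v (bmon i j q)" in exI, rule monos_span[OF _ bmon_inj bihom_keys]) auto
qed

lemma dim_bihom: "vs.dim (bihom i j :: 'k::field bipoly set) = (i + 1) * (j + 1)"
  using fam_basis_dim[OF bihom_basis] by simp

definition comp :: "nat \<Rightarrow> nat \<Rightarrow> 'k::comm_ring_1 bipoly \<Rightarrow> 'k bipoly" where
  "comp i j f = Abs_poly_mapping (\<lambda>m. if bdx m = i \<and> bdy m = j then lk f m else 0)"

lemma lookup_comp: "lk (comp i j f) m = (if bdx m = i \<and> bdy m = j then lk f m else 0)"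
proof -
  have "finite {m. (if bdx m = i \<and> bdy m = j then lk f m else 0) \<noteq> 0}"
    by (rule finite_subset[of _ "ks f"]) (auto simp: in_keys_iff)
  then show ?thesis unfolding comp_def by simp
qed

lemma comp_bihom: "comp i j f \<in> bihom i j"
  by (auto simp: bihom_iff in_keys_iff lookup_comp split: if_splits)

lemma comp_add: "comp i j (f + g) = comp i j f + comp i j g"
  by (rule poly_mapping_eqI) (simp add: lookup_comp lookup_add)

lemma comp_zero[simp]: "comp i j 0 = 0"
  by (rule poly_mapping_eqI) (simp add: lookup_comp)

lemma comp_sum: "comp i j (sum f S) = (\<Sum>x\<in>S. comp i j (f x))"
  by (induct S rule: infinite_finite_induct) (auto simp: comp_add)

lemma comp_of_bihom: "f \<in> bihom a b \<Longrightarrow> comp i j f = (if i = a \<and> j = b then f else 0)"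
  by (rule poly_mapping_eqI) (auto simp: lookup_comp bihom_iff in_keys_iff)

definition degs :: "'k::comm_ring_1 bipoly \<Rightarrow> (nat \<times> nat) set" where
  "degs f = (\<lambda>m. (bdx m, bdy m)) ` ks f"

lemma finite_degs[simp]: "finite (degs f)" by (simp add: degs_def)

lemma comp_notin: "(i, j) \<notin> degs f \<Longrightarrow> comp i j f = 0"
  by (rule poly_mapping_eqI) (auto simp: lookup_comp degs_def in_keys_iff image_iff)

lemma comp_decomp: "f = (\<Sum>ij\<in>degs f. comp (fst ij) (snd ij) f)"
proof (rule poly_mapping_eqI)
  fix m
  have "lk (\<Sum>ij\<in>degs f. comp (fst ij) (snd ij) f) m = (\<Sum>ij\<in>degs f. if ij = (bdx m, bdy m) then lk f m else 0)"
    by (simp add: lookup_sum lookup_comp prod_eq_iff eq_commute conj_commute)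
  also have "\<dots> = lk f m"
    by (auto simp: degs_def in_keys_iff)
  finally show "lk f m = lk (\<Sum>ij\<in>degs f. comp (fst ij) (snd ij) f) m" by simp
qed

lemma HQ:
  fixes P :: "'k::comm_ring_1 bipoly"
  assumes "P \<in> bihom 0 d" "P * s \<in> bihom 0 j"
  shows "P * s = (if d \<le> j then P * comp 0 (j - d) s else 0)"
proof -
  have "P * s = comp 0 j (P * s)" using comp_of_bihom[OF assms(2)] by simp
  also have "\<dots> = comp 0 j (\<Sum>ij\<in>degs s. P * comp (fst ij) (snd ij) s)"
    by (subst comp_decomp[of s]) (simp add: sum_distrib_left)
  also have "\<dots> = (\<Sum>ij\<in>degs s. if ij = (0, j - d) \<and> d \<le> j then P * comp 0 (j - d) s else 0)"
    unfolding comp_sum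
  proof (intro sum.cong refl)
    fix ij assume "ij \<in> degs s"
    have "P * comp (fst ij) (snd ij) s \<in> bihom (0 + fst ij) (d + snd ij)"
      by (rule bihom_mult[OF assms(1) comp_bihom])
    then show "comp 0 j (P * comp (fst ij) (snd ij) s) = (if ij = (0, j - d) \<and> d \<le> j then P * comp 0 (j - d) s else 0)"
      by (cases ij) (auto simp: comp_of_bihom)
  qed
  also have "\<dots> = (if d \<le> j then P * comp 0 (j - d) s else 0)"
    by (cases "(0, j - d) \<in> degs s") (auto simp: comp_notin)
  finally show ?thesis .
qed

lemma row_l_ge: "j < t \<Longrightarrow> m i j \<le> row_l t m i"
  unfolding row_l_def by (rule Max_ge) auto

lemma row_l_pos: "j < t \<Longrightarrow> 0 < m i j \<Longrightarrow> 0 < row_l t m i"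
  using row_l_ge[of j t m i] by simp

definition ll0 :: "nat \<Rightarrow> (nat \<Rightarrow> nat \<Rightarrow> nat) \<Rightarrow> nat \<Rightarrow> nat" where "ll0 t m i = row_l t m i"
definition LL0 :: "nat \<Rightarrow> nat \<Rightarrow> (nat \<Rightarrow> nat \<Rightarrow> nat) \<Rightarrow> nat" where "LL0 r t m = (\<Sum>i<r. ll0 t m i)"
definition hx0 :: "nat \<Rightarrow> nat \<Rightarrow> (nat \<Rightarrow> 'k::field \<times> 'k) \<Rightarrow> (nat \<Rightarrow> nat \<Rightarrow> nat) \<Rightarrow> nat \<Rightarrow> 'k bipoly" where
  "hx0 r t R m i = (\<Prod>i'\<in>{..<r} - {i}. lamx (R i') ^ ll0 t m i')"
definition wx0 :: "nat \<Rightarrow> nat \<Rightarrow> (nat \<Rightarrow> 'k::field \<times> 'k) \<Rightarrow> (nat \<Rightarrow> nat \<Rightarrow> nat) \<Rightarrow> nat \<Rightarrow> nat \<Rightarrow> 'k bipoly" where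
  "wx0 r t R m i a = nux (R i) ^ (ll0 t m i - 1 - a) * hx0 r t R m i"
definition gx0 :: "nat \<Rightarrow> nat \<Rightarrow> (nat \<Rightarrow> 'k::field \<times> 'k) \<Rightarrow> (nat \<Rightarrow> nat \<Rightarrow> nat) \<Rightarrow> nat \<times> nat \<Rightarrow> 'k bipoly" where
  "gx0 r t R m ia = lamx (R (fst ia)) ^ snd ia * wx0 r t R m (fst ia) (snd ia)"
definition IX0 :: "nat \<Rightarrow> nat \<Rightarrow> (nat \<Rightarrow> nat \<Rightarrow> nat) \<Rightarrow> (nat \<times> nat) set" where
  "IX0 r t m = Sigma {..<r} (\<lambda>i. {..<ll0 t m i})"
definition Aia0 :: "nat \<Rightarrow> (nat \<Rightarrow> nat \<Rightarrow> nat) \<Rightarrow> nat \<times> nat \<Rightarrow> nat" where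
  "Aia0 t m ia = (\<Sum>j<t. m (fst ia) j - snd ia)"
definition Py0 :: "nat \<Rightarrow> (nat \<Rightarrow> 'k::field \<times> 'k) \<Rightarrow> (nat \<Rightarrow> nat \<Rightarrow> nat) \<Rightarrow> nat \<times> nat \<Rightarrow> 'k bipoly" where
  "Py0 t Q m ia = (\<Prod>j<t. lamy (Q j) ^ (m (fst ia) j - snd ia))"

context
  fixes r t :: nat and R Q :: "nat \<Rightarrow> 'k::field \<times> 'k" and m :: "nat \<Rightarrow> nat \<Rightarrow> nat"
  assumes fpd: "fat_point_data r t R Q m"
begin

lemma R_pt: "i < r \<Longrightarrow> proj_pt (R i)" using fpd by (simp add: fat_point_data_def)
lemma Q_pt: "j < t \<Longrightarrow> proj_pt (Q j)" using fpd by (simp add: fat_point_data_def)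
lemma R_dist: "i < r \<Longrightarrow> i' < r \<Longrightarrow> i \<noteq> i' \<Longrightarrow> proj_distinct (R i) (R i')"
  using fpd by (simp add: fat_point_data_def)
lemma Q_dist: "j < t \<Longrightarrow> j' < t \<Longrightarrow> j \<noteq> j' \<Longrightarrow> proj_distinct (Q j) (Q j')"
  using fpd by (simp add: fat_point_data_def)
lemma l_pos: "i < r \<Longrightarrow> 0 < row_l t m i"
proof -
  assume "i < r"
  then obtain j where "j < t" "0 < m i j" using fpd unfolding fat_point_data_def by blast
  then show ?thesis by (rule row_l_pos)
qed

abbreviation ll where "ll \<equiv> ll0 t m"
abbreviation LL where "LL \<equiv> LL0 r t m"
abbreviation hx where "hx \<equiv> hx0 r t R m"
abbreviation wx where "wx \<equiv> wx0 r t R m"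
abbreviation gx where "gx \<equiv> gx0 r t R m"
abbreviation IX where "IX \<equiv> IX0 r t m"
abbreviation Aia where "Aia \<equiv> Aia0 t m"
abbreviation Py where "Py \<equiv> Py0 t Q m"

lemma finite_IX[simp]: "finite IX" by (simp add: IX0_def)

lemma card_IX: "card IX = LL" by (simp add: IX0_def LL0_def card_SigmaI)

lemma LL_pos: "0 < r \<Longrightarrow> 0 < LL"
  using l_pos[of 0] unfolding LL0_def ll0_def by (metis gr_zeroI lessThan_iff sum_eq_0_iff finite_lessThan)

lemma hx_xonly: "xonly (hx i)"
  unfolding hx0_def by (intro xonly_prod xonly_power lamx_xonly)

lemma wx_xonly: "xonly (wx i a)"
  unfolding wx0_def by (intro xonly_mult xonly_power nux_xonly hx_xonly)

lemma lam_not_dvd_hx: "i < r \<Longrightarrow> \<not> lamx (R i) dvd hx i"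
  unfolding hx0_def
  by (intro prime_not_dvd_prod prime_not_dvd_power isprime_lamx R_pt lamx_distinct R_dist) auto

lemma lam_not_dvd_wx: "i < r \<Longrightarrow> \<not> lamx (R i) dvd wx i a"
  unfolding wx0_def
  by (intro prime_not_dvd_mult prime_not_dvd_power isprime_lamx R_pt lamx_not_dvd_nux lam_not_dvd_hx)

lemma hx_dvd: "i < r \<Longrightarrow> i' < r \<Longrightarrow> i' \<noteq> i \<Longrightarrow> lamx (R i) ^ ll i dvd hx i'"
  unfolding hx0_def by (rule dvd_prodI) auto

lemma gx_dvd_other: "i < r \<Longrightarrow> i' < r \<Longrightarrow> i' \<noteq> i \<Longrightarrow> lamx (R i) ^ ll i dvd gx (i', a)"
  unfolding gx0_def wx0_def using hx_dvd by (simp add: dvd_mult)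

lemma gx_bihom: "ia \<in> IX \<Longrightarrow> gx ia \<in> bihom (LL - 1) 0"
proof -
  assume ia: "ia \<in> IX"
  obtain i a where ia': "ia = (i, a)" "i < r" "a < ll i" using ia by (cases ia) (auto simp: IX0_def)
  have hb: "hx i \<in> bihom (\<Sum>i'\<in>{..<r} - {i}. ll i' * 1) (\<Sum>i'\<in>{..<r} - {i}. ll i' * 0)"
    unfolding hx0_def by (intro bihom_prod bihom_power lamx_bihom)
  have h1: "lamx (R i) ^ a \<in> bihom (a * 1) (a * 0)" by (rule bihom_power[OF lamx_bihom])
  have h2: "nux (R i) ^ (ll i - 1 - a) \<in> bihom ((ll i - 1 - a) * 1) ((ll i - 1 - a) * 0)"
    by (rule bihom_power[OF nux_bihom])
  have "gx ia \<in> bihom (a * 1 + ((ll i - 1 - a) * 1 + (\<Sum>i'\<in>{..<r} - {i}. ll i' * 1))) (a * 0 + ((ll i - 1 - a) * 0 + (\<Sum>i'\<in>{..<r} - {i}. ll i' * 0)))"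
    unfolding gx0_def wx0_def ia' fst_conv snd_conv by (intro bihom_mult h1 h2 hb)
  then have "gx ia \<in> bihom (a + ((ll i - 1 - a) + (\<Sum>i'\<in>{..<r} - {i}. ll i'))) 0" by simp
  moreover have "LL = ll i + (\<Sum>i'\<in>{..<r} - {i}. ll i')"
    unfolding LL0_def using ia'(2) by (simp add: sum.remove)
  moreover have "a + ((ll i - 1 - a) + (\<Sum>i'\<in>{..<r} - {i}. ll i')) = ll i - 1 + (\<Sum>i'\<in>{..<r} - {i}. ll i')"
    using ia'(3) by simp
  ultimately show ?thesis using ia'(3) by simp
qed

lemma gx_eq: "gx (i, a) = lamx (R i) ^ a * wx i a" by (simp add: gx0_def)

lemma DEC:
  assumes "i < r"
  shows "\<exists>G. (\<Sum>ia\<in>IX. gx ia * T ia) = (\<Sum>a<ll i. lamx (R i) ^ a * wx i a * T (i, a)) + lamx (R i) ^ ll i * G"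
proof -
  have "(\<Sum>ia\<in>IX. gx ia * T ia) = (\<Sum>i'<r. \<Sum>a<ll i'. gx (i', a) * T (i', a))"
    unfolding IX0_def by (simp add: sum.Sigma)
  also have "\<dots> = (\<Sum>a<ll i. gx (i, a) * T (i, a)) + (\<Sum>i'\<in>{..<r} - {i}. \<Sum>a<ll i'. gx (i', a) * T (i', a))"
    using assms by (simp add: sum.remove)
  finally have eq: "(\<Sum>ia\<in>IX. gx ia * T ia) = (\<Sum>a<ll i. lamx (R i) ^ a * wx i a * T (i, a)) + (\<Sum>i'\<in>{..<r} - {i}. \<Sum>a<ll i'. gx (i', a) * T (i', a))"
    by (simp add: gx_eq)
  have "lamx (R i) ^ ll i dvd (\<Sum>i'\<in>{..<r} - {i}. \<Sum>a<ll i'. gx (i', a) * T (i', a))"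
    using assms gx_dvd_other by (auto intro!: dvd_sum dvd_mult2)
  then obtain G where "(\<Sum>i'\<in>{..<r} - {i}. \<Sum>a<ll i'. gx (i', a) * T (i', a)) = lamx (R i) ^ ll i * G" by blast
  then show ?thesis using eq by auto
qed

lemma G1:
  assumes "\<forall>ia\<in>IX. yonly (T ia)" "(\<Sum>ia\<in>IX. gx ia * T ia) = 0"
  shows "\<forall>ia\<in>IX. T ia = 0"
proof
  fix ia assume ia: "ia \<in> IX"
  obtain i a where ia': "ia = (i, a)" "i < r" "a < ll i" using ia by (cases ia) (auto simp: IX0_def)
  obtain G where G: "(\<Sum>ia\<in>IX. gx ia * T ia) = (\<Sum>a<ll i. lamx (R i) ^ a * wx i a * T (i, a)) + lamx (R i) ^ ll i * G"
    using DEC[OF ia'(2)] by blast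
  have "\<forall>a<ll i. T (i, a) = 0"
  proof (rule Z_lemma[OF R_pt[OF ia'(2)]])
    show "\<forall>a<ll i. xonly (wx i a) \<and> \<not> lamx (R i) dvd wx i a"
      using ia'(2) by (simp add: wx_xonly lam_not_dvd_wx)
    show "\<forall>a<ll i. yonly (T (i, a))" using assms(1) ia'(2) by (simp add: IX0_def)
    show "(\<Sum>a<ll i. lamx (R i) ^ a * wx i a * T (i, a)) + lamx (R i) ^ ll i * G = 0"
      using G assms(2) by simp
  qed
  then show "T ia = 0" using ia' by simp
qed

lemma G2:
  assumes "\<forall>ia\<in>IX. yonly (T ia)" "i < r" "j < t"
    "(\<Sum>ia\<in>IX. gx ia * T ia) \<in> Jset (lamx (R i)) (lamy (Q j)) (m i j)"
  shows "\<forall>a<m i j. lamy (Q j) ^ (m i j - a) dvd T (i, a)"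
proof -
  obtain G where G: "(\<Sum>ia\<in>IX. gx ia * T ia) = (\<Sum>a<ll i. lamx (R i) ^ a * wx i a * T (i, a)) + lamx (R i) ^ ll i * G"
    using DEC[OF assms(2)] by blast
  show ?thesis
  proof (rule LL_lemma[OF R_pt[OF assms(2)] Q_pt[OF assms(3)]])
    show "\<forall>a<ll i. xonly (wx i a) \<and> \<not> lamx (R i) dvd wx i a"
      using assms(2) by (simp add: wx_xonly lam_not_dvd_wx)
    show "\<forall>a<ll i. yonly (T (i, a))" using assms(1,2) by (simp add: IX0_def)
    show "m i j \<le> ll i" using row_l_ge[OF assms(3)] by (simp add: ll0_def)
    show "(\<Sum>a<ll i. lamx (R i) ^ a * wx i a * T (i, a)) + lamx (R i) ^ ll i * G \<in> Jset (lamx (R i)) (lamy (Q j)) (m i j)"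
      using G assms(4) by simp
  qed
qed

lemma G3:
  assumes "ia \<in> IX" "i' < r" "j' < t"
  shows "gx ia * Py ia * X \<in> Jset (lamx (R i')) (lamy (Q j')) (m i' j')"
proof -
  obtain i a where ia': "ia = (i, a)" "i < r" "a < ll i" using assms(1) by (cases ia) (auto simp: IX0_def)
  let ?M = "m i' j'"
  have M: "?M \<le> ll i'" using row_l_ge[OF assms(3)] by (simp add: ll0_def)
  show ?thesis
  proof (cases "i' = i")
    case False
    have "lamx (R i') ^ ?M dvd lamx (R i') ^ ll i'" using M by (rule le_imp_power_dvd)
    also have "\<dots> dvd gx (i, a)" using gx_dvd_other[OF assms(2) ia'(2)] False by simp
    finally show ?thesis using ia' by (intro Jset_dvd[of ?M]) (auto intro: dvd_mult2)
  next
    case True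
    show ?thesis
    proof (cases "?M \<le> a")
      case True
      have "lamx (R i) ^ ?M dvd lamx (R i) ^ a" using True by (rule le_imp_power_dvd)
      also have "\<dots> dvd gx (i, a)" by (simp add: gx_eq)
      finally show ?thesis using ia' \<open>i' = i\<close> by (intro Jset_dvd[of ?M]) (auto intro: dvd_mult2)
    next
      case False
      have "lamy (Q j') ^ (m i j' - a) dvd (\<Prod>j<t. lamy (Q j) ^ (m i j - a))"
        by (rule dvd_prodI) (use assms(3) in auto)
      then have "lamy (Q j') ^ (m i j' - a) dvd Py (i, a)" by (simp add: Py0_def)
      moreover have "lamx (R i) ^ a dvd gx (i, a)" by (simp add: gx_eq)
      ultimately have "lamx (R i) ^ a * lamy (Q j') ^ (?M - a) dvd gx ia * Py ia * X"
        using ia' \<open>i' = i\<close> by (auto intro: mult_dvd_mono dvd_mult2)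
      then show ?thesis using False \<open>i' = i\<close> by (intro Jset_dvd[of a]) auto
    qed
  qed
qed

lemma fat_ideal_iff:
  "f \<in> fat_ideal r t R Q m \<longleftrightarrow> (\<forall>i<r. \<forall>j<t. 0 < m i j \<longrightarrow> f \<in> Jset (lamx (R i)) (lamy (Q j)) (m i j))"
  by (auto simp: fat_ideal_def ideal_pow_point)

end

lemma sum_Sigma_regroup:
  fixes g :: "'i \<Rightarrow> 'k::comm_ring_1 bipoly"
  assumes "finite I" "\<And>i. i \<in> I \<Longrightarrow> finite (B i)"
  shows "(\<Sum>iq\<in>Sigma I B. pconst (c iq) * (g (fst iq) * h (fst iq) (snd iq))) =
         (\<Sum>i\<in>I. g i * (\<Sum>q\<in>B i. pconst (c (i, q)) * h i q))"
proof -
  have "(\<Sum>iq\<in>Sigma I B. pconst (c iq) * (g (fst iq) * h (fst iq) (snd iq))) =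
        (\<Sum>i\<in>I. \<Sum>q\<in>B i. pconst (c (i, q)) * (g i * h i q))"
    using assms by (subst sum.Sigma) (auto simp: split_def)
  also have "\<dots> = (\<Sum>i\<in>I. g i * (\<Sum>q\<in>B i. pconst (c (i, q)) * h i q))"
    by (simp add: sum_distrib_left mult.left_commute)
  finally show ?thesis .
qed

lemma fam_basis_card:
  fixes e :: "'i \<Rightarrow> 'k::field bipoly" and f :: "'j \<Rightarrow> 'k bipoly"
  assumes "finite I" "fam_indep I e" "e ` I \<subseteq> V" "fam_basis V J f" "card I = card J"
  shows "fam_basis V I e"
  unfolding fam_basis_def
proof (intro conjI assms ballI)
  fix v assume v: "v \<in> V"
  have inj: "inj_on e I" by (rule fam_indep_inj[OF assms(1,2)])
  have fJ: "finite J" using assms(4) by (simp add: fam_basis_def)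
  have Vsp: "V \<subseteq> vs.span (f ` J)" using assms(4) comb_in_span unfolding fam_basis_def by fastforce
  have "v \<in> vs.span (e ` I)"
  proof (rule ccontr)
    assume nv: "v \<notin> vs.span (e ` I)"
    have ind: "vs.independent (insert v (e ` I))"
      by (rule vs.independent_insertI[OF nv fam_indep_independent[OF assms(1,2)]])
    have "insert v (e ` I) \<subseteq> vs.span (f ` J)" using v assms(3) Vsp by auto
    then have "card (insert v (e ` I)) \<le> card (f ` J)"
      using vs.independent_span_bound[OF _ ind] fJ by auto
    also have "\<dots> \<le> card J" using fJ by (rule card_image_le)
    finally have "card (insert v (e ` I)) \<le> card I" using assms(5) by simp
    moreover have "v \<notin> e ` I" using nv vs.span_base by blast
    ultimately show False using assms(1) card_image[OF inj] by simp
  qed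
  then obtain u where "v = (\<Sum>x\<in>e ` I. pscale (u x) x)"
    using vs.span_finite[of "e ` I"] assms(1) by auto
  then have "v = (\<Sum>i\<in>I. pconst (u (e i)) * e i)"
    by (simp add: sum.reindex[OF inj] pscale_eq)
  then show "\<exists>c. v = (\<Sum>i\<in>I. pconst (c i) * e i)" by (rule exI[of _ "\<lambda>i. u (e i)"])
qed

lemma fam_indepD: "fam_indep I e \<Longrightarrow> (\<Sum>i\<in>I. pconst (c i) * e i) = 0 \<Longrightarrow> i \<in> I \<Longrightarrow> c i = 0"
  unfolding fam_indep_def by blast

lemma ycomb_yonly: "yonly (\<Sum>q\<in>S. pconst (c q) * ym j q)"
  by (intro yonly_sum yonly_mult yonly_pconst) (simp add: ym_def ymon_def yonly_def lookup_add lookup_single)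

lemma ycomb_bihom: "(\<Sum>q\<le>j. pconst (c q) * ym j q) \<in> bihom 0 j"
  by (intro bihom_sum bihom_cmult ym_bihom) simp

context
  fixes r t :: nat and R Q :: "nat \<Rightarrow> 'k::field \<times> 'k" and m :: "nat \<Rightarrow> nat \<Rightarrow> nat"
  assumes fpd: "fat_point_data r t R Q m"
begin

abbreviation llB where "llB \<equiv> ll0 t m"
abbreviation LLB where "LLB \<equiv> LL0 r t m"
abbreviation gxB where "gxB \<equiv> gx0 r t R m"
abbreviation IXB where "IXB \<equiv> IX0 r t m"
abbreviation AiaB where "AiaB \<equiv> Aia0 t m"
abbreviation PyB where "PyB \<equiv> Py0 t Q m"

lemma finIX[simp]: "finite IXB" by (rule finite_IX[OF fpd])

lemma Py_nz: "PyB ia \<noteq> 0"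
  unfolding Py0_def using lamy_nz[OF Q_pt[OF fpd]] by (simp add: prod_zero_iff)

lemma Py_bihom: "PyB ia \<in> bihom 0 (AiaB ia)"
proof -
  have "PyB ia \<in> bihom (\<Sum>j<t. (m (fst ia) j - snd ia) * 0) (\<Sum>j<t. (m (fst ia) j - snd ia) * 1)"
    unfolding Py0_def by (intro bihom_prod bihom_power lamy_bihom)
  then show ?thesis by (simp add: Aia0_def)
qed

lemma Py_yonly: "yonly (PyB ia)"
  by (rule bihom_yonly[OF Py_bihom])

lemma Py_dvd:
  assumes "\<forall>j<t. lamy (Q j) ^ (m i j - a) dvd T"
  shows "PyB (i, a) dvd T"
  unfolding Py0_def fst_conv snd_conv
  by (rule prod_pow_dvd) (use assms isprime_lamy[OF Q_pt[OF fpd]] lamy_distinct[OF Q_pt[OF fpd] Q_pt[OF fpd] Q_dist[OF fpd]] in auto)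


lemma gy_basis:
  assumes "0 < r"
  shows "fam_basis (bihom (LLB - 1) j) (IXB \<times> {..j}) (\<lambda>iaq. gxB (fst iaq) * ym j (snd iaq))"
proof (rule fam_basis_card[OF _ _ _ bihom_basis])
  show "finite (IXB \<times> {..j})" by simp
  show "card (IXB \<times> {..j}) = card ({..LLB - 1} \<times> {..j})"
    using LL_pos[OF fpd assms] by (simp add: card_cartesian_product card_IX[OF fpd])
  have "gxB ia * ym j q \<in> bihom (LLB - 1) j" if "ia \<in> IXB" "q \<in> {..j}" for ia q
  proof -
    have "gxB ia * ym j q \<in> bihom (LLB - 1 + 0) (0 + j)"
      using that by (intro bihom_mult gx_bihom[OF fpd] ym_bihom) auto
    then show ?thesis by simp
  qed
  then show "(\<lambda>iaq. gxB (fst iaq) * ym j (snd iaq)) ` (IXB \<times> {..j}) \<subseteq> bihom (LLB - 1) j" by auto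
  show "fam_indep (IXB \<times> {..j}) (\<lambda>iaq. gxB (fst iaq) * ym j (snd iaq))"
    unfolding fam_indep_def
  proof (intro allI impI ballI)
    fix c iaq
    assume S: "(\<Sum>iaq\<in>IXB \<times> {..j}. pconst (c iaq) * (gxB (fst iaq) * ym j (snd iaq))) = 0"
      and iaq: "iaq \<in> IXB \<times> {..j}"
    have "(\<Sum>ia\<in>IXB. gxB ia * (\<Sum>q\<in>{..j}. pconst (c (ia, q)) * ym j q)) = 0"
      using S sum_Sigma_regroup[of IXB "\<lambda>_. {..j}" c gxB "\<lambda>_ q. ym j q"] by simp
    then have "\<forall>ia\<in>IXB. (\<Sum>q\<in>{..j}. pconst (c (ia, q)) * ym j q) = 0"
      by (intro G1[OF fpd]) (auto intro: ycomb_yonly)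
    then have "(\<Sum>q\<le>j. pconst (c (fst iaq, q)) * ym j q) = 0" using iaq by auto
    then have "\<forall>q\<in>{..j}. c (fst iaq, q) = 0"
      using fam_indepD[OF ym_indep[of j], where c="\<lambda>q. c (fst iaq, q)"] by blast
    then show "c iaq = 0" using iaq by (cases iaq) auto
  qed
qed

lemma V_basis:
  assumes "0 < r"
  shows "fam_basis (fat_ideal r t R Q m \<inter> bihom (LLB - 1) j)
           (Sigma {ia \<in> IXB. AiaB ia \<le> j} (\<lambda>ia. {..j - AiaB ia}))
           (\<lambda>iaq. gxB (fst iaq) * PyB (fst iaq) * ym (j - AiaB (fst iaq)) (snd iaq))"
  unfolding fam_basis_def
proof (intro conjI)
  let ?IX1 = "{ia \<in> IXB. AiaB ia \<le> j}"
  let ?EX = "Sigma ?IX1 (\<lambda>ia. {..j - AiaB ia})"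
  let ?e = "\<lambda>iaq. gxB (fst iaq) * PyB (fst iaq) * ym (j - AiaB (fst iaq)) (snd iaq)"
  have fin1: "finite ?IX1" by simp
  show "finite ?EX" by simp
  show "fam_indep ?EX ?e"
    unfolding fam_indep_def
  proof (intro allI impI ballI)
    fix c iaq
    assume S: "(\<Sum>iaq\<in>?EX. pconst (c iaq) * ?e iaq) = 0" and iaq: "iaq \<in> ?EX"
    define Tq where "Tq ia = (\<Sum>q\<in>{..j - AiaB ia}. pconst (c (ia, q)) * ym (j - AiaB ia) q)" for ia
    define T where "T ia = (if ia \<in> ?IX1 then PyB ia * Tq ia else 0)" for ia
    have "(\<Sum>ia\<in>?IX1. (gxB ia * PyB ia) * Tq ia) = 0"
      using S sum_Sigma_regroup[OF fin1, of "\<lambda>ia. {..j - AiaB ia}" c "\<lambda>ia. gxB ia * PyB ia" "\<lambda>ia q. ym (j - AiaB ia) q"]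
      by (simp add: Tq_def)
    moreover have "(\<Sum>ia\<in>?IX1. (gxB ia * PyB ia) * Tq ia) = (\<Sum>ia\<in>IXB. gxB ia * T ia)"
      by (simp add: sum.inter_filter T_def mult.assoc if_distrib[of "\<lambda>x. gxB _ * x"] cong: if_cong)
    ultimately have "(\<Sum>ia\<in>IXB. gxB ia * T ia) = 0" by simp
    moreover have "\<forall>ia\<in>IXB. yonly (T ia)"
      by (auto simp: T_def Tq_def intro!: yonly_mult Py_yonly ycomb_yonly)
    ultimately have "\<forall>ia\<in>IXB. T ia = 0" by (intro G1[OF fpd]) auto
    then have "Tq (fst iaq) = 0" using iaq Py_nz[of "fst iaq"] by (auto simp: T_def)
    then have "\<forall>q\<in>{..j - AiaB (fst iaq)}. c (fst iaq, q) = 0"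
      using fam_indepD[OF ym_indep[of "j - AiaB (fst iaq)"], where c="\<lambda>q. c (fst iaq, q)"] unfolding Tq_def by blast
    then show "c iaq = 0" using iaq by (cases iaq) auto
  qed
  have "gxB ia * PyB ia * ym (j - AiaB ia) q \<in> fat_ideal r t R Q m \<inter> bihom (LLB - 1) j"
    if iaq: "ia \<in> IXB" "AiaB ia \<le> j" "q \<in> {..j - AiaB ia}" for ia q
  proof
    have "gxB ia * PyB ia * ym (j - AiaB ia) q \<in> bihom (LLB - 1 + 0 + 0) (0 + AiaB ia + (j - AiaB ia))"
      using iaq by (intro bihom_mult gx_bihom[OF fpd] Py_bihom ym_bihom) auto
    then show "gxB ia * PyB ia * ym (j - AiaB ia) q \<in> bihom (LLB - 1) j" using iaq by simp
    show "gxB ia * PyB ia * ym (j - AiaB ia) q \<in> fat_ideal r t R Q m"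
      unfolding fat_ideal_iff[OF fpd] using iaq by (auto intro!: G3[OF fpd])
  qed
  then show "?e ` ?EX \<subseteq> fat_ideal r t R Q m \<inter> bihom (LLB - 1) j" by auto
  show "\<forall>v\<in>fat_ideal r t R Q m \<inter> bihom (LLB - 1) j. \<exists>c. v = (\<Sum>iaq\<in>?EX. pconst (c iaq) * ?e iaq)"
  proof
    fix v assume v: "v \<in> fat_ideal r t R Q m \<inter> bihom (LLB - 1) j"
    obtain c where c: "v = (\<Sum>iaq\<in>IXB \<times> {..j}. pconst (c iaq) * (gxB (fst iaq) * ym j (snd iaq)))"
      using gy_basis[OF assms, of j] v unfolding fam_basis_def by blast
    define T where "T ia = (\<Sum>q\<in>{..j}. pconst (c (ia, q)) * ym j q)" for ia
    have vT: "v = (\<Sum>ia\<in>IXB. gxB ia * T ia)"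
      using c sum_Sigma_regroup[of IXB "\<lambda>_. {..j}" c gxB "\<lambda>_ q. ym j q"] by (simp add: T_def)
    have Ty: "\<forall>ia\<in>IXB. yonly (T ia)" by (simp add: T_def ycomb_yonly)
    have "\<exists>d. T ia = (if AiaB ia \<le> j then PyB ia * (\<Sum>q\<in>{..j - AiaB ia}. pconst (d q) * ym (j - AiaB ia) q) else 0)"
      if ia: "ia \<in> IXB" for ia
    proof -
      obtain i a where ia': "ia = (i, a)" "i < r" using ia by (cases ia) (auto simp: IX0_def)
      have "\<forall>j'<t. lamy (Q j') ^ (m i j' - a) dvd T (i, a)"
      proof (intro allI impI)
        fix j' assume j': "j' < t"
        show "lamy (Q j') ^ (m i j' - a) dvd T (i, a)"
        proof (cases "a < m i j'")
          case True
          then have "v \<in> Jset (lamx (R i)) (lamy (Q j')) (m i j')"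
            using v j' ia'(2) fat_ideal_iff[OF fpd, of v] by auto
          then show ?thesis using G2[OF fpd Ty ia'(2) j'] True vT by simp
        next
          case False then show ?thesis by simp
        qed
      qed
      then have "PyB (i, a) dvd T (i, a)" by (rule Py_dvd)
      then obtain s where s: "T ia = PyB ia * s" using ia' by blast
      have "T ia \<in> bihom 0 j" by (simp add: T_def ycomb_bihom)
      then have Ts: "T ia = (if AiaB ia \<le> j then PyB ia * comp 0 (j - AiaB ia) s else 0)"
        using HQ[OF Py_bihom, of ia s j] s by simp
      obtain d where "comp 0 (j - AiaB ia) s = (\<Sum>q\<le>j - AiaB ia. pconst (d q) * ym (j - AiaB ia) q)"
        using ym_span[OF comp_bihom] by blast
      then show ?thesis using Ts by (intro exI[of _ d]) (simp add: atMost_atLeast0)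
    qed
    then have "\<forall>ia\<in>IXB. \<exists>d. T ia = (if AiaB ia \<le> j then PyB ia * (\<Sum>q\<in>{..j - AiaB ia}. pconst (d q) * ym (j - AiaB ia) q) else 0)"
      by blast
    from bchoice[OF this] obtain D where D: "\<forall>ia\<in>IXB. T ia = (if AiaB ia \<le> j then PyB ia * (\<Sum>q\<in>{..j - AiaB ia}. pconst (D ia q) * ym (j - AiaB ia) q) else 0)"
      by blast
    have "v = (\<Sum>ia\<in>IXB. if AiaB ia \<le> j then (gxB ia * PyB ia) * (\<Sum>q\<in>{..j - AiaB ia}. pconst (D ia q) * ym (j - AiaB ia) q) else 0)"
      unfolding vT by (intro sum.cong refl) (simp add: D mult.assoc)
    also have "\<dots> = (\<Sum>ia\<in>?IX1. (gxB ia * PyB ia) * (\<Sum>q\<in>{..j - AiaB ia}. pconst (D ia q) * ym (j - AiaB ia) q))"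
      by (simp add: sum.inter_filter)
    also have "\<dots> = (\<Sum>iaq\<in>?EX. pconst (D (fst iaq) (snd iaq)) * ?e iaq)"
      using sum_Sigma_regroup[OF fin1, of "\<lambda>ia. {..j - AiaB ia}" "\<lambda>iaq. D (fst iaq) (snd iaq)" "\<lambda>ia. gxB ia * PyB ia" "\<lambda>ia q. ym (j - AiaB ia) q"]
      by simp
    finally show "\<exists>c. v = (\<Sum>iaq\<in>?EX. pconst (c iaq) * ?e iaq)"
      by (rule exI[of _ "\<lambda>iaq. D (fst iaq) (snd iaq)"])
  qed
qed

lemma dim_V:
  assumes "0 < r"
  shows "vs.dim (fat_ideal r t R Q m \<inter> bihom (LLB - 1) j) = (\<Sum>ia\<in>IXB. (j + 1) - AiaB ia)"
proof -
  let ?IX1 = "{ia \<in> IXB. AiaB ia \<le> j}"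
  have "vs.dim (fat_ideal r t R Q m \<inter> bihom (LLB - 1) j) = card (Sigma ?IX1 (\<lambda>ia. {..j - AiaB ia}))"
    by (rule fam_basis_dim[OF V_basis[OF assms]])
  also have "\<dots> = (\<Sum>ia\<in>?IX1. j - AiaB ia + 1)" by (simp add: card_SigmaI)
  also have "\<dots> = (\<Sum>ia\<in>IXB. (j + 1) - AiaB ia)"
    by (simp add: sum.inter_filter) (intro sum.cong refl, auto)
  finally show ?thesis .
qed

end

lemma listcomp_eq: "[f i k. i \<leftarrow> xs, k \<leftarrow> ys i] = concat (map (\<lambda>i. map (f i) (ys i)) xs)"
  by (induct xs) auto

lemma length_filter_sum: "length (filter P xs) = (\<Sum>x\<leftarrow>xs. if P x then 1 else 0)"
  by (induct xs) auto

lemma sum_list_concat_map: "(\<Sum>x\<leftarrow>concat xss. g x) = (\<Sum>xs\<leftarrow>xss. \<Sum>x\<leftarrow>xs. g x)"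
  by (induct xss) auto

lemma sum_list_upt_lt: "(\<Sum>i\<leftarrow>[0..<n]. h i) = (\<Sum>i<n. h i)"
  by (simp add: interv_sum_list_conv_sum_set_nat atLeast0LessThan)

lemma count_listcomp:
  "length (filter P (concat (map (\<lambda>i. map (f i) [0..<L i]) [0..<r]))) =
   card {ia \<in> Sigma {..<r} (\<lambda>i. {..<L i}). P (f (fst ia) (snd ia))}"
proof -
  have "length (filter P (concat (map (\<lambda>i. map (f i) [0..<L i]) [0..<r]))) =
        (\<Sum>i<r. \<Sum>k<L i. if P (f i k) then 1 else 0)"
    by (simp add: length_filter_sum sum_list_concat_map comp_def sum_list_upt_lt)
  also have "\<dots> = (\<Sum>ia\<in>Sigma {..<r} (\<lambda>i. {..<L i}). if P (f (fst ia) (snd ia)) then 1 else 0)"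
    by (subst sum.Sigma) (auto simp: split_def)
  also have "\<dots> = card {ia \<in> Sigma {..<r} (\<lambda>i. {..<L i}). P (f (fst ia) (snd ia))}"
    by (simp add: sum.inter_filter[symmetric])
  finally show ?thesis .
qed

lemma length_listcomp:
  "length (concat (map (\<lambda>i. map (f i) [0..<L i]) [0..<r])) = (\<Sum>i<r. L i)"
  by (simp add: length_concat comp_def sum_list_upt_lt)

lemma conj_part_eq: "conj_part lam i = length (filter (\<lambda>x. i \<le> x) lam)"
  by (simp add: conj_part_def length_filter_conv_card)

lemma filter_rev_sort: "length (filter P (rev (sort xs))) = length (filter P xs)"
proof -
  have "mset (filter P (sort xs)) = mset (filter P xs)" by (simp add: mset_filter)
  then have "length (filter P (sort xs)) = length (filter P xs)" by (rule mset_eq_length)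
  then show ?thesis by (simp add: rev_filter[symmetric])
qed

lemma alpha_eq: "alpha r t m = rev (sort (concat (map (\<lambda>i. map (\<lambda>k. \<Sum>j<t. m i j - k) [0..<row_l t m i]) [0..<r])))"
  unfolding alpha_def by (simp only: concat_map_singleton)

lemma length_alpha: "length (alpha r t m) = LL0 r t m"
  by (simp add: alpha_eq length_listcomp LL0_def ll0_def)

lemma conj_alpha: "conj_part (alpha r t m) c = card {ia \<in> IX0 r t m. c \<le> Aia0 t m ia}"
  unfolding conj_part_eq alpha_eq filter_rev_sort count_listcomp
  by (simp add: IX0_def Aia0_def ll0_def)

lemma hilb_neg: "i < 0 \<or> j < 0 \<Longrightarrow> hilb r t R Q m i j = 0"
  by (simp add: hilb_def)

lemma delta_sum:
  "(\<Sum>h<n. delta_hilb r t R Q m (int h) y) =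
     hilb r t R Q m (int n - 1) y - hilb r t R Q m (int n - 1) (y - 1)"
proof -
  define f where "f k = hilb r t R Q m (int k - 1) y - hilb r t R Q m (int k - 1) (y - 1)" for k
  have "delta_hilb r t R Q m (int h) y = f (Suc h) - f h" for h
    by (simp add: f_def delta_hilb_def)
  then have "(\<Sum>h<n. delta_hilb r t R Q m (int h) y) = (\<Sum>h<n. f (Suc h) - f h)" by simp
  also have "\<dots> = f n - f 0" by (rule sum_lessThan_telescope)
  also have "f 0 = 0" by (simp add: f_def hilb_neg)
  finally show ?thesis by (simp add: f_def)
qed

context
  fixes r t :: nat and R Q :: "nat \<Rightarrow> 'k::field \<times> 'k" and m :: "nat \<Rightarrow> nat \<Rightarrow> nat"
  assumes fpd: "fat_point_data r t R Q m"
begin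

abbreviation IXC where "IXC \<equiv> IX0 r t m"
abbreviation AiaC where "AiaC \<equiv> Aia0 t m"
abbreviation LLC where "LLC \<equiv> LL0 r t m"

lemma hilb_N:
  assumes "0 < r"
  shows "hilb r t R Q m (int (LLC - 1)) (int j) = (\<Sum>ia\<in>IXC. int (min (j + 1) (AiaC ia)))"
proof -
  have L: "0 < LLC" by (rule LL_pos[OF fpd assms])
  define N where "N = LLC - 1"
  have "hilb r t R Q m (int N) (int j) =
        int (vs.dim (bihom N j :: 'k bipoly set)) - int (vs.dim (fat_ideal r t R Q m \<inter> bihom N j))"
    by (simp add: hilb_def)
  also have "vs.dim (fat_ideal r t R Q m \<inter> bihom N j) = (\<Sum>ia\<in>IXC. (j + 1) - AiaC ia)"
    unfolding N_def by (rule dim_V[OF fpd assms])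
  also have "vs.dim (bihom N j :: 'k bipoly set) = (LLC - 1 + 1) * (j + 1)"
    unfolding N_def by (rule dim_bihom)
  finally have "hilb r t R Q m (int (LLC - 1)) (int j) =
        int ((LLC - 1 + 1) * (j + 1)) - int (\<Sum>ia\<in>IXC. (j + 1) - AiaC ia)"
    unfolding N_def .
  also have "(LLC - 1 + 1) * (j + 1) = (\<Sum>ia\<in>IXC. min (j + 1) (AiaC ia) + ((j + 1) - AiaC ia))"
  proof -
    have "(\<Sum>ia\<in>IXC. min (j + 1) (AiaC ia) + ((j + 1) - AiaC ia)) = (\<Sum>ia\<in>IXC. j + 1)"
      by (intro sum.cong refl) auto
    then show ?thesis using L card_IX[OF fpd] by simp
  qed
  also have "int \<dots> - int (\<Sum>ia\<in>IXC. (j + 1) - AiaC ia) = (\<Sum>ia\<in>IXC. int (min (j + 1) (AiaC ia)))"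
    by (simp add: sum.distrib)
  finally show ?thesis .
qed

lemma hilb_N':
  assumes "0 < r"
  shows "hilb r t R Q m (int (LLC - 1)) (int j - 1) = (\<Sum>ia\<in>IXC. int (min j (AiaC ia)))"
proof (cases j)
  case 0 then show ?thesis by (simp add: hilb_neg)
next
  case (Suc j') then show ?thesis using hilb_N[OF assms, of j'] by simp
qed

lemma part1:
  "int (conj_part (alpha r t m) (j + 1)) = (\<Sum>h < length (alpha r t m). delta_hilb r t R Q m (int h) (int j))"
proof (cases "r = 0")
  case True
  then show ?thesis by (simp add: alpha_def conj_part_def)
next
  case False
  then have r: "0 < r" by simp
  have L: "0 < LLC" by (rule LL_pos[OF fpd r])
  have "(\<Sum>h < length (alpha r t m). delta_hilb r t R Q m (int h) (int j)) =
        hilb r t R Q m (int (LLC - 1)) (int j) - hilb r t R Q m (int (LLC - 1)) (int j - 1)"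
    using L by (simp add: length_alpha delta_sum of_nat_diff)
  also have "\<dots> = (\<Sum>ia\<in>IXC. int (min (j + 1) (AiaC ia))) - (\<Sum>ia\<in>IXC. int (min j (AiaC ia)))"
    by (simp only: hilb_N[OF r] hilb_N'[OF r])
  also have "\<dots> = (\<Sum>ia\<in>IXC. int (min (j + 1) (AiaC ia)) - int (min j (AiaC ia)))"
    by (simp add: sum_subtractf)
  also have "\<dots> = (\<Sum>ia\<in>IXC. if j + 1 \<le> AiaC ia then 1 else 0)"
    by (intro sum.cong refl) auto
  also have "\<dots> = (\<Sum>ia\<in>{ia \<in> IXC. j + 1 \<le> AiaC ia}. 1)"
    by (rule sum.inter_filter[symmetric]) (rule finite_IX[OF fpd])
  also have "\<dots> = int (card {ia \<in> IXC. j + 1 \<le> AiaC ia})"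
    by simp
  finally show ?thesis by (simp add: conj_alpha)
qed

end

definition swp :: "var \<Rightarrow> 'k::comm_ring_1 bipoly" where
  "swp v = (case v of X0 \<Rightarrow> pvar Y0 | X1 \<Rightarrow> pvar Y1 | Y0 \<Rightarrow> pvar X0 | Y1 \<Rightarrow> pvar X1)"

definition sw :: "'k::comm_ring_1 bipoly \<Rightarrow> 'k bipoly" where
  "sw = subst swp"

definition swm :: "mon \<Rightarrow> mon" where
  "swm m = sg X0 (lk m Y0) + sg X1 (lk m Y1) + sg Y0 (lk m X0) + sg Y1 (lk m X1)"

lemma lookup_swm: "lk (swm m) v = lk m (case v of X0 \<Rightarrow> Y0 | X1 \<Rightarrow> Y1 | Y0 \<Rightarrow> X0 | Y1 \<Rightarrow> X1)"
  by (cases v) (simp_all add: swm_def lookup_add lookup_single)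

lemma swm_swm[simp]: "swm (swm m) = m"
  by (rule poly_mapping_eqI, rename_tac v, case_tac v) (simp_all add: lookup_swm)

lemma swm_eq_iff: "swm a = b \<longleftrightarrow> a = swm b"
  by (metis swm_swm)

lemma mev_swp: "mev swp m = (sg (swm m) 1 :: 'k::comm_ring_1 bipoly)"
proof -
  have "mev swp m = pvar Y0 ^ lk m X0 * pvar Y1 ^ lk m X1 * pvar X0 ^ lk m Y0 * pvar X1 ^ lk m Y1"
    by (simp add: mev_def swp_def)
  also have "\<dots> = (sg (swm m) 1 :: 'k bipoly)"
    by (simp add: pvar_power single_mult_1 swm_def algebra_simps)
  finally show ?thesis .
qed

lemma lookup_sw: "lk (sw p) m = lk p (swm m)"
proof -
  have "sw p = (\<Sum>m'\<in>ks p. pconst (lk p m') * sg (swm m') 1)"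
    by (simp add: sw_def subst_def mev_swp)
  then have "lk (sw p) m = (\<Sum>m'\<in>ks p. if swm m' = m then lk p m' else 0)"
    by (simp add: lookup_monos)
  also have "\<dots> = (\<Sum>m'\<in>ks p. if m' = swm m then lk p (swm m) else 0)"
    by (intro sum.cong refl) (auto simp: swm_eq_iff)
  also have "\<dots> = lk p (swm m)" by (simp add: in_keys_iff)
  finally show ?thesis .
qed

lemma sw_sw[simp]: "sw (sw p) = p"
  by (rule poly_mapping_eqI) (simp add: lookup_sw)

lemma sw_inj: "sw a = sw b \<Longrightarrow> a = b"
  by (metis sw_sw)

lemma sw_add: "sw (a + b) = sw a + sw b" by (simp add: sw_def subst_add)
lemma sw_mult: "sw (a * b) = sw a * sw b" by (simp add: sw_def subst_mult)
lemma sw_pconst[simp]: "sw (pconst c) = pconst c" by (simp add: sw_def)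
lemma sw_0[simp]: "sw 0 = 0" by (simp add: sw_def)
lemma sw_power: "sw (a ^ n) = sw a ^ n" by (simp add: sw_def subst_power)
lemma sw_sum: "sw (sum f S) = (\<Sum>x\<in>S. sw (f x))" by (simp add: sw_def subst_sum)

lemma sw_lamx: "sw (lamx A) = lamy (A :: 'k::field \<times> 'k)"
  by (simp add: sw_def lamx_def lamy_def subst_diff subst_mult swp_def)
lemma sw_lamy: "sw (lamy B) = lamx (B :: 'k::field \<times> 'k)"
  by (simp add: sw_def lamx_def lamy_def subst_diff subst_mult swp_def)

lemma bdx_swm: "bdx (swm m) = bdy m" and bdy_swm: "bdy (swm m) = bdx m"
  by (simp_all add: bdx_def bdy_def lookup_swm add.commute)

lemma sw_bihom: "p \<in> bihom i j \<Longrightarrow> sw p \<in> bihom j i"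
  unfolding bihom_iff
proof
  fix m' assume p: "\<forall>m\<in>ks p. bdx m = i \<and> bdy m = j" and m': "m' \<in> ks (sw p)"
  then have "swm m' \<in> ks p" by (simp add: in_keys_iff lookup_sw)
  then have "bdx (swm m') = i \<and> bdy (swm m') = j" using p by blast
  then show "bdx m' = j \<and> bdy m' = i" by (simp add: bdx_swm bdy_swm)
qed

lemma sw_bihom_iff: "sw p \<in> bihom j i \<longleftrightarrow> p \<in> bihom i j"
  using sw_bihom[of p i j] sw_bihom[of "sw p" j i] by auto

lemma Jset_sym: "Jset l u m \<subseteq> Jset u l m"
proof
  fix f assume "f \<in> Jset l u m"
  then obtain H where H: "f = (\<Sum>c\<le>m. l ^ c * u ^ (m - c) * H c)" by (auto simp: Jset_def)
  have "l ^ c * u ^ (m - c) * H c \<in> Jset u l m" if "c \<le> m" for c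
    using Jset_gen[of "m - c" m u l "H c"] that by (simp add: mult.commute)
  then show "f \<in> Jset u l m" unfolding H by (intro Jset_sum) auto
qed

lemma sw_Jset: "f \<in> Jset l u m \<Longrightarrow> sw f \<in> Jset (sw l) (sw u) m"
proof -
  assume "f \<in> Jset l u m"
  then obtain H where H: "f = (\<Sum>c\<le>m. l ^ c * u ^ (m - c) * H c)" by (auto simp: Jset_def)
  then have "sw f = (\<Sum>c\<le>m. sw l ^ c * sw u ^ (m - c) * sw (H c))"
    by (simp add: sw_sum sw_mult sw_power)
  then show ?thesis by (auto simp: Jset_def)
qed

lemma sw_Jset_point: "sw f \<in> Jset (lamx B) (lamy A) k \<longleftrightarrow> f \<in> Jset (lamx A) (lamy (B :: 'k::field \<times> 'k)) k"
proof
  assume a: "f \<in> Jset (lamx A) (lamy B) k"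
  have "sw f \<in> Jset (sw (lamx A)) (sw (lamy B)) k" by (rule sw_Jset[OF a])
  then have "sw f \<in> Jset (lamy A) (lamx B) k" by (simp add: sw_lamx sw_lamy)
  then show "sw f \<in> Jset (lamx B) (lamy A) k" using Jset_sym by blast
next
  assume a: "sw f \<in> Jset (lamx B) (lamy A) k"
  have "sw (sw f) \<in> Jset (sw (lamx B)) (sw (lamy A)) k" by (rule sw_Jset[OF a])
  then have "f \<in> Jset (lamy B) (lamx A) k" by (simp add: sw_lamx sw_lamy)
  then show "f \<in> Jset (lamx A) (lamy B) k" using Jset_sym by blast
qed

lemma fpd_swap: "fat_point_data r t R Q m \<Longrightarrow> fat_point_data t r Q R (\<lambda>a b. m b a)"
  unfolding fat_point_data_def by blast

lemma sw_fat_ideal: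
  "sw f \<in> fat_ideal t r Q R (\<lambda>a b. m b a) \<longleftrightarrow> f \<in> fat_ideal r t R Q (m :: nat \<Rightarrow> nat \<Rightarrow> nat)"
  unfolding fat_ideal_def ideal_pow_point by (auto simp: sw_Jset_point)

lemma sw_span: "x \<in> vs.span S \<Longrightarrow> sw x \<in> vs.span (sw ` S)"
proof (induct rule: vs.span_induct_alt)
  case base then show ?case by (simp add: vs.span_zero)
next
  case (step c x y)
  have "sw (pscale c x + y) = pscale c (sw x) + sw y" by (simp add: pscale_eq sw_add sw_mult)
  then show ?case using step by (simp add: vs.span_add vs.span_scale vs.span_base)
qed

lemma sw_independent:
  assumes "vs.independent (B :: 'k::field bipoly set)"
  shows "vs.independent (sw ` B)"
proof
  assume "vs.dependent (sw ` B)"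
  then obtain T u v where T: "finite T" "T \<subseteq> sw ` B" "v \<in> T" "u v \<noteq> 0" "(\<Sum>v\<in>T. pscale (u v) v) = 0"
    unfolding vs.dependent_explicit by blast
  have inj: "inj_on sw (sw ` T)" by (rule inj_onI) (metis sw_sw)
  have "sw ` T \<subseteq> B" using T(2) by auto
  moreover have "(\<Sum>w\<in>sw ` T. pscale (u (sw w)) w) = 0"
  proof -
    have "(\<Sum>w\<in>sw ` T. pscale (u (sw w)) w) = (\<Sum>v\<in>T. pscale (u v) (sw v))"
      by (subst sum.reindex) (auto intro: inj_onI simp: sw_inj)
    also have "\<dots> = sw (\<Sum>v\<in>T. pscale (u v) v)" by (simp add: sw_sum pscale_eq sw_mult)
    also have "\<dots> = 0" using T(5) by simp
    finally show ?thesis .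
  qed
  moreover have "sw v \<in> sw ` T" "u (sw (sw v)) \<noteq> 0" using T by auto
  ultimately have "vs.dependent B"
    unfolding vs.dependent_explicit using T(1) T(3)
    by (intro exI[of _ "sw ` T"] exI[of _ "\<lambda>w. u (sw w)"]) auto
  then show False using assms by simp
qed

lemma dim_sw_image: "vs.dim (sw ` V) = vs.dim (V :: 'k::field bipoly set)"
proof -
  obtain B where B: "B \<subseteq> V" "vs.independent B" "V \<subseteq> vs.span B" "card B = vs.dim V"
    by (rule vs.basis_exists)
  have inj: "inj_on sw B" by (rule inj_onI) (rule sw_inj)
  show ?thesis
  proof (rule vs.dim_unique)
    show "sw ` B \<subseteq> sw ` V" using B by auto
    show "sw ` V \<subseteq> vs.span (sw ` B)" using B sw_span by blast
    show "vs.independent (sw ` B)" by (rule sw_independent[OF B(2)])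
    show "card (sw ` B) = vs.dim V" using B card_image[OF inj] by simp
  qed
qed

lemma sw_image_V:
  "sw ` (fat_ideal r t R Q m \<inter> bihom i j) = fat_ideal t r Q R (\<lambda>a b. m b a) \<inter> bihom j (i::nat)"
proof
  show "sw ` (fat_ideal r t R Q m \<inter> bihom i j) \<subseteq> fat_ideal t r Q R (\<lambda>a b. m b a) \<inter> bihom j i"
    by (auto simp: sw_fat_ideal sw_bihom)
  show "fat_ideal t r Q R (\<lambda>a b. m b a) \<inter> bihom j i \<subseteq> sw ` (fat_ideal r t R Q m \<inter> bihom i j)"
  proof
    fix g assume g: "g \<in> fat_ideal t r Q R (\<lambda>a b. m b a) \<inter> bihom j i"
    have "sw g \<in> fat_ideal r t R Q m \<inter> bihom i j"
      using g sw_fat_ideal[of "sw g" t r Q R m] sw_bihom_iff[of "sw g" j i] by auto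
    then show "g \<in> sw ` (fat_ideal r t R Q m \<inter> bihom i j)" by (metis sw_sw imageI)
  qed
qed

lemma hilb_swap:
  "hilb r t R Q m i j = hilb t r Q R (\<lambda>a b. m b a) j (i :: int)"
proof (cases "i < 0 \<or> j < 0")
  case True then show ?thesis by (auto simp: hilb_def)
next
  case False
  have "vs.dim (fat_ideal t r Q R (\<lambda>a b. m b a) \<inter> bihom (nat j) (nat i)) = vs.dim (sw ` (fat_ideal r t R Q m \<inter> bihom (nat i) (nat j)))"
    by (simp only: sw_image_V)
  also have "\<dots> = vs.dim (fat_ideal r t R Q m \<inter> bihom (nat i) (nat j))"
    by (rule dim_sw_image)
  finally have "vs.dim (fat_ideal t r Q R (\<lambda>a b. m b a) \<inter> bihom (nat j) (nat i)) = vs.dim (fat_ideal r t R Q m \<inter> bihom (nat i) (nat j))" .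
  then show ?thesis using False by (simp add: hilb_def dim_bihom mult.commute)
qed

lemma delta_swap:
  "delta_hilb r t R Q m i j = delta_hilb t r Q R (\<lambda>a b. m b a) j i"
  unfolding delta_hilb_def hilb_swap[of r t R Q m] by (simp add: algebra_simps)

lemma beta_swap: "beta r t m = alpha t r (\<lambda>a b. m b a)"
  by (simp add: alpha_def beta_def row_l_def col_l_def)

theorem lemma4p6:
  fixes r t :: nat and R Q :: "nat \<Rightarrow> 'k::alg_closed_field \<times> 'k" and m :: "nat \<Rightarrow> nat \<Rightarrow> nat"
  assumes "fat_point_data r t R Q m"
  shows "(\<forall>j < length (beta r t m).
            int (conj_part (alpha r t m) (j + 1))
              = (\<Sum>h < length (alpha r t m). delta_hilb r t R Q m (int h) (int j)))
       \<and> (\<forall>i < length (alpha r t m).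
            int (conj_part (beta r t m) (i + 1))
              = (\<Sum>h < length (beta r t m). delta_hilb r t R Q m (int i) (int h)))"
proof (intro conjI allI impI)
  fix j
  show "int (conj_part (alpha r t m) (j + 1)) = (\<Sum>h < length (alpha r t m). delta_hilb r t R Q m (int h) (int j))"
    by (rule part1[OF assms])
next
  fix i
  have "int (conj_part (beta r t m) (i + 1)) = int (conj_part (alpha t r (\<lambda>a b. m b a)) (i + 1))"
    by (simp add: beta_swap)
  also have "\<dots> = (\<Sum>h < length (alpha t r (\<lambda>a b. m b a)). delta_hilb t r Q R (\<lambda>a b. m b a) (int h) (int i))"
    by (rule part1[OF fpd_swap[OF assms]])
  also have "\<dots> = (\<Sum>h < length (beta r t m). delta_hilb r t R Q m (int i) (int h))"
    by (simp only: beta_swap delta_swap[of r t R Q m])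
  finally show "int (conj_part (beta r t m) (i + 1)) = (\<Sum>h < length (beta r t m). delta_hilb r t R Q m (int i) (int h))" .
qed

end
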